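(* The functions $c\mapsto h_1(c)+2h_2(c)$ and $c\mapsto h_2(c)$ are increasing on the interval $I_A=[c_*,\bar c]$, where $c_*=\frac2{\sqrt3}$ and $\bar c=e^{\frac{1.3065-1}{2}}$.
   Context: Let $K(R)=\frac{\exp(\frac{R^2-1}{2})}{R}$ for $R>0$ (strictly decreasing on $(0,1]$, strictly increasing on $[1,\infty)$, $K(1)=1$). For $s\ge1$ let $R^-(s)\in(0,1]$, $R^+(s)\in[1,\infty)$ be the solutions of $K(R)=s$. For $c\ge c_*$ define $h_1(c)=\int_{\pi/3}^{2\pi/3}\frac{d\psi}{1-[R^-(c\sin\psi)]^2}$ and $h_2(c)=\int_{R^-(\frac{\sqrt3}{2}c)}^{R^+(\frac{\sqrt3}{2}c)}\frac{K(R)\,dR}{R\sqrt{c^2-K(R)^2}}$. *)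

theory Defs
  imports "HOL-Analysis.Analysis"
begin

definition K :: "real \<Rightarrow> real" where
  "K R = exp ((R^2 - 1) / 2) / R"

text \<open>For s \<ge> 1: the solution of K R = s in (0,1], resp. in [1,\<infinity>).\<close>
definition R_minus :: "real \<Rightarrow> real" where
  "R_minus s = (THE R. 0 < R \<and> R \<le> 1 \<and> K R = s)"

definition R_plus :: "real \<Rightarrow> real" where
  "R_plus s = (THE R. 1 \<le> R \<and> K R = s)"

definition h1 :: "real \<Rightarrow> real" where
  "h1 c = integral {pi/3 .. 2*pi/3} (\<lambda>\<psi>. 1 / (1 - (R_minus (c * sin \<psi>))^2))"

definition h2 :: "real \<Rightarrow> real" where
  "h2 c = integral {R_minus (sqrt 3 / 2 * c) .. R_plus (sqrt 3 / 2 * c)}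
            (\<lambda>R. K R / (R * sqrt (c^2 - (K R)^2)))"

definition c_star :: real where
  "c_star = 2 / sqrt 3"

definition c_bar :: real where
  "c_bar = exp ((13065 / 10000 - 1) / 2)"

end

theory Submission
  imports Defs "HOL-Analysis.Analysis"
begin

lemma K_pos: "R > 0 \<Longrightarrow> K R > 0"
  by (simp add: K_def)

lemma K_one[simp]: "K 1 = 1"
  by (simp add: K_def)

lemma K_deriv: "R > 0 \<Longrightarrow> (K has_real_derivative K R * (R^2 - 1) / R) (at R)"
proof -
  assume R: "R > 0"
  have "((\<lambda>R. exp ((R^2 - 1) / 2) / R) has_real_derivative
     (exp ((R^2 - 1) / 2) * (2 * R / 2) * R - exp ((R^2 - 1) / 2) * 1) / (R * R)) (at R)"
    using R by (auto intro!: derivative_eq_intros)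
  moreover have "(exp ((R^2 - 1) / 2) * (2 * R / 2) * R - exp ((R^2 - 1) / 2) * 1) / (R * R)
     = K R * (R^2 - 1) / R"
    using R by (simp add: K_def field_simps power2_eq_square)
  ultimately show ?thesis unfolding K_def[abs_def] by (rule DERIV_cong)
qed

lemma K_cont: "continuous_on {a..b} K" if "a > 0"
proof -
  have "\<forall>x\<in>{a..b}. isCont K x"
    using that K_deriv by (meson DERIV_isCont atLeastAtMost_iff less_le_trans)
  then show ?thesis by (simp add: continuous_at_imp_continuous_on)
qed

lemma K_dec: assumes "0 < a" "a < b" "b \<le> 1" shows "K b < K a"
proof -
  have "K b < K a"
    apply (rule DERIV_neg_imp_decreasing_open[OF assms(2) _ K_cont[OF assms(1)]])
    subgoal for x
    proof (rule exI[of _ "K x * (x^2 - 1) / x"], intro conjI)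
      assume x: "a < x" "x < b"
      show "(K has_real_derivative K x * (x^2 - 1) / x) (at x)" using K_deriv x assms by simp
      have "x^2 < 1" using power_strict_mono[of x 1 2] x assms by simp
      thus "K x * (x^2 - 1) / x < 0" using K_pos[of x] x assms
        by (simp add: divide_neg_pos mult_pos_neg)
    qed
    done
  then show ?thesis .
qed

lemma K_inc: assumes "1 \<le> a" "a < b" shows "K a < K b"
proof -
  show "K a < K b"
    apply (rule DERIV_pos_imp_increasing_open[OF assms(2) _ K_cont])
    subgoal for x
    proof (rule exI[of _ "K x * (x^2 - 1) / x"], intro conjI)
      assume x: "a < x" "x < b"
      show "(K has_real_derivative K x * (x^2 - 1) / x) (at x)" using K_deriv x assms by simp
      have "1 < x^2" using power_strict_mono[of 1 x 2] x assms by simp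
      thus "K x * (x^2 - 1) / x > 0" using K_pos[of x] x assms
        by (simp add: divide_pos_pos)
    qed
    using assms by simp
qed

lemma K_ge_inv: "R > 0 \<Longrightarrow> K R \<ge> 1 / (2 * R)"
proof -
  assume R: "R > 0"
  have "exp ((R^2 - 1) / 2) \<ge> 1 + (R^2 - 1)/2" by (rule exp_ge_add_one_self)
  hence "1 + R^2 \<le> 2 * exp ((R^2 - 1) / 2)" by (simp add: field_simps)
  hence "exp ((R^2 - 1) / 2) \<ge> 1/2" using zero_le_power2[of R] by linarith
  thus ?thesis using R by (simp add: K_def field_simps)
qed

lemma K_ge_half: "R > 0 \<Longrightarrow> K R \<ge> R / 2"
proof -
  assume R: "R > 0"
  have "exp ((R^2 - 1) / 2) \<ge> 1 + (R^2 - 1)/2" by (rule exp_ge_add_one_self)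
  hence "exp ((R^2 - 1) / 2) \<ge> R^2 / 2" by (simp add: field_simps)
  thus ?thesis using R by (simp add: K_def le_divide_eq power2_eq_square)
qed

lemma K_inj_lo: "0 < a \<Longrightarrow> a \<le> 1 \<Longrightarrow> 0 < b \<Longrightarrow> b \<le> 1 \<Longrightarrow> K a = K b \<Longrightarrow> a = b"
  using K_dec[of a b] K_dec[of b a] by (cases "a < b"; cases "b < a") auto

lemma K_inj_hi: "1 \<le> a \<Longrightarrow> 1 \<le> b \<Longrightarrow> K a = K b \<Longrightarrow> a = b"
  using K_inc[of a b] K_inc[of b a] by (cases "a < b"; cases "b < a") auto

lemma Rm_ex: assumes "s \<ge> 1" shows "\<exists>!R. 0 < R \<and> R \<le> 1 \<and> K R = s"
proof -
  define a where "a = 1 / (2 * s)"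
  have a: "0 < a" "a \<le> 1" using assms by (auto simp: a_def)
  have "K a \<ge> s" using K_ge_inv[OF a(1)] assms by (simp add: a_def)
  then obtain R where "a \<le> R" "R \<le> 1" "K R = s"
    using IVT2'[where f=K and b=1 and y=s and a=a] a K_cont[OF a(1), of 1] assms by auto
  then show ?thesis using a K_inj_lo by (metis less_le_trans)
qed

lemma Rp_ex: assumes "s \<ge> 1" shows "\<exists>!R. 1 \<le> R \<and> K R = s"
proof -
  have "s \<le> K (2 * s)" using K_ge_half[of "2 * s"] assms by simp
  then obtain R where "1 \<le> R" "R \<le> 2 * s" "K R = s"
    using IVT'[where f=K and a=1 and y=s and b="2 * s"] K_cont[of 1 "2 * s"] assms by auto
  then show ?thesis using K_inj_hi by metis
qed

lemma Rm: assumes "s \<ge> 1" shows "0 < R_minus s" "R_minus s \<le> 1" "K (R_minus s) = s"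
  using theI'[OF Rm_ex[OF assms]] unfolding R_minus_def by auto

lemma Rp: assumes "s \<ge> 1" shows "1 \<le> R_plus s" "K (R_plus s) = s"
  using theI'[OF Rp_ex[OF assms]] unfolding R_plus_def by auto

lemma K_ge1_lo: "0 < R \<Longrightarrow> R \<le> 1 \<Longrightarrow> K R \<ge> 1"
  using K_dec[of R 1] by (cases "R = 1") auto

lemma K_ge1_hi: "1 \<le> R \<Longrightarrow> K R \<ge> 1"
  using K_inc[of 1 R] by (cases "R = 1") auto

lemma Rm_K: "0 < R \<Longrightarrow> R \<le> 1 \<Longrightarrow> R_minus (K R) = R"
  using Rm[of "K R"] K_ge1_lo K_inj_lo by metis

lemma Rp_K: "1 \<le> R \<Longrightarrow> R_plus (K R) = R"
  using Rp[of "K R"] K_ge1_hi K_inj_hi by metis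

lemma exp_up2_neg: assumes "x \<le> (0::real)" shows "exp x \<le> 1 + x + x^2/2"
proof -
  let ?g = "\<lambda>x::real. 1 + x + x^2/2 - exp x"
  have "?g 0 \<le> ?g x"
  proof (cases "x = 0")
    case False
    show ?thesis
    proof (rule DERIV_nonpos_imp_decreasing_open[of x 0 ?g])
      show "x \<le> 0" using assms by simp
      fix y assume "x < y" "y < 0"
      have "(?g has_real_derivative (1 + y - exp y)) (at y)"
        by (auto intro!: derivative_eq_intros)
      moreover have "1 + y - exp y \<le> 0" using exp_ge_add_one_self[of y] by linarith
      ultimately show "\<exists>d. (?g has_real_derivative d) (at y) \<and> d \<le> 0" by blast
    next
      show "continuous_on {x..0} ?g" by (intro continuous_intros) auto
    qed
  qed simp
  thus ?thesis by simp
qed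

lemma exp_lo3_neg: assumes "x \<le> (0::real)" shows "1 + x + x^2/2 + x^3/6 \<le> exp x"
proof -
  let ?g = "\<lambda>x::real. exp x - (1 + x + x^2/2 + x^3/6)"
  have "?g 0 \<le> ?g x"
  proof (cases "x = 0")
    case False
    show ?thesis
    proof (rule DERIV_nonpos_imp_decreasing_open[of x 0 ?g])
      show "x \<le> 0" using assms by simp
      fix y assume "x < y" "y < 0"
      have "(?g has_real_derivative (exp y - (1 + y + y^2/2))) (at y)"
        by (auto intro!: derivative_eq_intros simp: power2_eq_square)
      moreover have "exp y - (1 + y + y^2/2) \<le> 0" using exp_up2_neg[of y] \<open>y < 0\<close> by linarith
      ultimately show "\<exists>d. (?g has_real_derivative d) (at y) \<and> d \<le> 0" by blast
    next
      show "continuous_on {x..0} ?g" by (intro continuous_intros) auto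
    qed
  qed simp
  thus ?thesis by simp
qed

lemma exp_lo3_pos: assumes "x \<ge> (0::real)" shows "1 + x + x^2/2 + x^3/6 \<le> exp x"
proof -
  let ?g = "\<lambda>x::real. exp x - (1 + x + x^2/2 + x^3/6)"
  have "?g 0 \<le> ?g x"
  proof (cases "x = 0")
    case False
    show ?thesis
    proof (rule DERIV_nonneg_imp_increasing_open[of 0 x ?g])
      show "0 \<le> x" using assms by simp
      fix y assume "0 < y" "y < x"
      have "(?g has_real_derivative (exp y - (1 + y + y^2/2))) (at y)"
        by (auto intro!: derivative_eq_intros simp: power2_eq_square)
      moreover have "exp y - (1 + y + y^2/2) \<ge> 0" using exp_lower_Taylor_quadratic[of y] \<open>0 < y\<close> by linarith
      ultimately show "\<exists>d. (?g has_real_derivative d) (at y) \<and> d \<ge> 0" by blast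
    next
      show "continuous_on {0..x} ?g" by (intro continuous_intros) auto
    qed
  qed simp
  thus ?thesis by simp
qed

lemma exp_up_pos: assumes "x \<ge> (0::real)" "1 - x + x^2/2 - x^3/6 > 0"
  shows "exp x \<le> 1 / (1 - x + x^2/2 - x^3/6)"
proof -
  have "1 - x + x^2/2 - x^3/6 \<le> exp (-x)" using exp_lo3_neg[of "-x"] assms by simp
  hence "(1 - x + x^2/2 - x^3/6) * exp x \<le> exp (-x) * exp x"
    by (intro mult_right_mono) auto
  also have "exp (-x) * exp x = 1" by (simp add: exp_add[symmetric])
  finally have "(1 - x + x^2/2 - x^3/6) * exp x \<le> 1" .
  thus ?thesis using assms(2) by (simp add: field_simps)
qed

lemma sqrt3_up: "sqrt 3 \<le> 17321/10000"
  by (rule real_le_lsqrt) (auto simp: power2_eq_square)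

lemma sqrt3_lo: "17320/10000 \<le> sqrt 3"
  by (rule real_le_rsqrt) (auto simp: power2_eq_square)


lemma K_06_lo: "11657/10000 \<le> K (6/10)"
proof -
  have e: "1 + (-8/25) + (-8/25)^2/2 + (-8/25)^3/6 \<le> exp (-8/25::real)"
    by (rule exp_lo3_neg) simp
  have "K (6/10) = exp (-8/25) / (6/10)" by (simp add: K_def power2_eq_square)
  thus ?thesis using e by (simp add: field_simps)
qed

lemma K_06_up: "K (6/10) \<le> 122/100"
proof -
  have e: "exp (-8/25::real) \<le> 1 + (-8/25) + (-8/25)^2/2"
    by (rule exp_up2_neg) simp
  have "K (6/10) = exp (-8/25) / (6/10)" by (simp add: K_def power2_eq_square)
  thus ?thesis using e by (simp add: field_simps)
qed

lemma K_09_lo: "10096/10000 \<le> K (9/10)"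
proof -
  have e: "1 + (-19/200) + (-19/200)^2/2 + (-19/200)^3/6 \<le> exp (-19/200::real)"
    by (rule exp_lo3_neg) simp
  have "K (9/10) = exp (-19/200) / (9/10)" by (simp add: K_def power2_eq_square)
  thus ?thesis using e by (simp add: field_simps)
qed

lemma K_1105_lo: "10096/10000 \<le> K (1105/1000)"
proof -
  have e: "1 + (44205/400000) + (44205/400000)^2/2 + (44205/400000)^3/6 \<le> exp (44205/400000::real)"
    by (rule exp_lo3_pos) simp
  have "K (1105/1000) = exp (44205/400000) / (1105/1000)" by (simp add: K_def power2_eq_square)
  thus ?thesis using e by (simp add: field_simps)
qed

lemma cbar_up: "c_bar \<le> 11657/10000"
proof -
  have e: "exp (613/4000::real) \<le> 1 / (1 - 613/4000 + (613/4000)^2/2 - (613/4000)^3/6)"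
    by (rule exp_up_pos) (auto simp: power2_eq_square power3_eq_cube)
  have "c_bar = exp (613/4000)" by (simp add: c_bar_def)
  thus ?thesis using e by (simp add: field_simps)
qed

lemma cstar_sq: "c_star^2 = 4/3"
  by (simp add: c_star_def power_divide)

lemma cstar_lo: "115/100 \<le> c_star"
  using sqrt3_up by (simp add: c_star_def field_simps)

lemma sigma_cstar: "sqrt 3 / 2 * c_star = 1"
  by (simp add: c_star_def)

lemma cstar_pos: "c_star > 0" by (simp add: c_star_def)

lemma sigma_up: "c \<le> c_bar \<Longrightarrow> sqrt 3 / 2 * c \<le> 10096/10000"
proof -
  assume "c \<le> c_bar"
  hence "c \<le> 11657/10000" using cbar_up by simp
  hence "sqrt 3 / 2 * c \<le> sqrt 3 / 2 * (11657/10000)" by (simp add: mult_left_mono)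
  also have "\<dots> \<le> 17321/10000 / 2 * (11657/10000)" using sqrt3_up by simp
  finally show ?thesis by linarith
qed

lemma sigma_ge1: "c_star \<le> c \<Longrightarrow> 1 \<le> sqrt 3 / 2 * c"
  using sigma_cstar by (metis mult_left_mono less_eq_real_def divide_nonneg_pos real_sqrt_ge_zero zero_le_numeral zero_less_numeral)

lemma Rm_anti: "1 \<le> s1 \<Longrightarrow> s1 \<le> s2 \<Longrightarrow> R_minus s2 \<le> R_minus s1"
  using Rm[of s1] Rm[of s2] K_dec[of "R_minus s1" "R_minus s2"] by force

lemma Rp_mono: "1 \<le> s1 \<Longrightarrow> s1 \<le> s2 \<Longrightarrow> R_plus s1 \<le> R_plus s2"
  using Rp[of s1] Rp[of s2] K_inc[of "R_plus s2" "R_plus s1"] by force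

lemma Rm_lo06: "1 \<le> s \<Longrightarrow> s \<le> 11657/10000 \<Longrightarrow> 6/10 \<le> R_minus s"
  using Rm[of s] K_dec[of "R_minus s" "6/10"] K_06_lo by force

lemma Rm_lo09: "1 \<le> s \<Longrightarrow> s \<le> 10096/10000 \<Longrightarrow> 9/10 \<le> R_minus s"
  using Rm[of s] K_dec[of "R_minus s" "9/10"] K_09_lo by force

lemma Rp_up: "1 \<le> s \<Longrightarrow> s \<le> 10096/10000 \<Longrightarrow> R_plus s \<le> 1105/1000"
  using Rp[of s] K_inc[of "1105/1000" "R_plus s"] K_1105_lo by force

lemma K_le_between: assumes "1 \<le> s" "R_minus s \<le> R" "R \<le> R_plus s" shows "K R \<le> s"
proof (cases "R \<le> 1")
  case True
  then show ?thesis using Rm[OF assms(1)] K_dec[of "R_minus s" R] assms by (cases "R = R_minus s") auto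
next
  case False
  then show ?thesis using Rp[OF assms(1)] K_inc[of R "R_plus s"] assms by (cases "R = R_plus s") auto
qed

lemma Rm_pos_between: "1 \<le> s \<Longrightarrow> R_minus s \<le> R \<Longrightarrow> 0 < R"
  using Rm(1)[of s] by linarith

lemma K_ge1: "0 < R \<Longrightarrow> 1 \<le> K R"
  using K_ge1_lo K_ge1_hi by (cases "R \<le> 1") auto

lemma isCont_K[continuous_intros]: "0 < R \<Longrightarrow> continuous (at R) K"
  using K_deriv DERIV_isCont by blast

definition fc :: "real \<Rightarrow> real \<Rightarrow> real" where
  "fc c R = K R / (R * sqrt (c^2 - (K R)^2))"

lemma h2_fc: "h2 c = integral {R_minus (sqrt 3 / 2 * c) .. R_plus (sqrt 3 / 2 * c)} (fc c)"
  by (simp add: h2_def fc_def[abs_def])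

lemma fc_cont:
  assumes "1 \<le> s" "s < c"
  shows "continuous_on {R_minus s .. R_plus s} (fc c)"
proof -
  have "isCont (fc c) R" if "R \<in> {R_minus s .. R_plus s}" for R
  proof -
    have R: "0 < R" using that Rm_pos_between assms by auto
    have "K R \<le> s" using K_le_between that assms by auto
    hence "(K R)^2 < c^2" using K_ge1[OF R] assms by (intro power_strict_mono) auto
    hence "R * sqrt (c^2 - (K R)^2) \<noteq> 0" using R by simp
    thus ?thesis unfolding fc_def using R by (intro continuous_intros) auto
  qed
  thus ?thesis by (simp add: continuous_at_imp_continuous_on)
qed

lemma inv_diff_bound: fixes a b :: real assumes "0 < a" "a \<le> b"
  shows "1/a - 1/b \<le> (b^2 - a^2) / (2 * a^3)"
proof -
  have b: "0 < b" using assms by simp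
  have eq: "(b^2-a^2)/(2*a^3) - (1/a - 1/b) = ((b-a)*(b-a)*(b+2*a))/(2*a^3*b)"
    using assms b by (simp add: field_simps power2_eq_square power3_eq_cube)
  have "0 \<le> ((b-a)*(b-a)*(b+2*a))/(2*a^3*b)"
    using assms b by (intro divide_nonneg_pos mult_nonneg_nonneg) auto
  thus ?thesis using eq by linarith
qed

lemma fc_eq: "fc c R = K R / R * (1 / sqrt (c^2 - (K R)^2))"
  by (simp add: fc_def)

lemma fc_diff:
  assumes "c_star \<le> c1" "c1 \<le> c2" "c2 \<le> c_bar" "0 < R" "K R \<le> sqrt 3 / 2 * c1"
  shows "fc c1 R \<le> fc c2 R + K R / R * (61/10) * (c2 - c1)"
proof -
  define k where "k = K R"
  have k: "1 \<le> k" using K_ge1[OF assms(4)] by (simp add: k_def)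
  have c1pos: "0 < c1" using cstar_pos assms by linarith
  have "k^2 \<le> (sqrt 3 / 2 * c1)^2" using assms(5) k by (intro power_mono) (auto simp: k_def)
  also have "\<dots> = 3/4 * c1^2" by (simp add: power_mult_distrib power_divide)
  finally have k2: "k^2 \<le> 3/4 * c1^2" .
  have "c_star^2 \<le> c1^2" using assms cstar_pos by (intro power_mono) auto
  hence c1sq: "4/3 \<le> c1^2" using cstar_sq by simp
  define A where "A = c1^2 - k^2"
  define B where "B = c2^2 - k^2"
  have A13: "1/3 \<le> A" using k2 c1sq by (simp add: A_def)
  have "c1^2 \<le> c2^2" using assms c1pos by (intro power_mono) auto
  hence AB: "A \<le> B" by (simp add: A_def B_def)
  define a where "a = sqrt A"
  define b where "b = sqrt B"
  have a0: "577/1000 \<le> a" unfolding a_def using A13 by (intro real_le_rsqrt) (auto simp: power2_eq_square)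
  have ab: "a \<le> b" unfolding a_def b_def using AB by simp
  have "1/a - 1/b \<le> (b^2 - a^2) / (2 * a^3)" using a0 ab by (intro inv_diff_bound) auto
  also have "b^2 - a^2 = c2^2 - c1^2" using A13 AB by (simp add: a_def b_def A_def B_def)
  also have "c2^2 - c1^2 = (c2 - c1) * (c2 + c1)" by (simp add: power2_eq_square algebra_simps)
  also have "(c2 - c1) * (c2 + c1) \<le> (c2 - c1) * (2 * (11657/10000))"
    using assms cbar_up by (intro mult_left_mono) auto
  also have "(577/1000)^3 \<le> a^3" using a0 by (intro power_mono) auto
  hence "(c2 - c1) * (2 * (11657/10000)) / (2 * a^3) \<le> (c2 - c1) * (2 * (11657/10000)) / (2 * (577/1000)^3)"
    using assms a0 by (intro divide_left_mono mult_pos_pos) auto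
  finally have "1/a - 1/b \<le> (c2 - c1) * (2 * (11657/10000)) / (2 * (577/1000)^3)"
    using a0 by (simp add: divide_right_mono)
  also have "\<dots> = (c2 - c1) * ((2 * (11657/10000)) / (2 * (577/1000)^3))" by simp
  also have "\<dots> \<le> (c2 - c1) * (61/10)" using assms by (intro mult_left_mono) (auto simp: power_divide)
  also have "\<dots> = (61/10) * (c2 - c1)" by simp
  finally have d: "1/a - 1/b \<le> (61/10) * (c2 - c1)" .
  have kr: "0 \<le> K R / R" using assms(4) K_pos[of R] by simp
  have "fc c1 R - fc c2 R = K R / R * (1/a - 1/b)"
    by (simp add: fc_eq a_def b_def A_def B_def k_def algebra_simps)
  also have "\<dots> \<le> K R / R * ((61/10) * (c2 - c1))" using d kr by (intro mult_left_mono) auto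
  also have "\<dots> = K R / R * (61/10) * (c2 - c1)" by simp
  finally show ?thesis by linarith
qed

lemma fc_lower:
  assumes "0 < R" "K R < c"
  shows "1 / (R * c) \<le> fc c R"
proof -
  have k: "1 \<le> K R" using K_ge1[OF assms(1)] .
  have "(K R)^2 < c^2" using assms k by (intro power_strict_mono) auto
  hence q: "0 < sqrt (c^2 - (K R)^2)" by simp
  have "sqrt (c^2 - (K R)^2) \<le> sqrt (c^2)" by (rule real_sqrt_le_mono) simp
  also have "sqrt (c^2) = c" using assms k by simp
  finally have qc: "sqrt (c^2 - (K R)^2) \<le> c" .
  have "1 / (R * c) \<le> 1 / (R * sqrt (c^2 - (K R)^2))"
    using q qc assms k by (intro divide_left_mono mult_left_mono mult_pos_pos) auto
  also have "\<dots> \<le> K R / (R * sqrt (c^2 - (K R)^2))"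
    using q assms k by (intro divide_right_mono) auto
  finally show ?thesis by (simp add: fc_def)
qed

abbreviation sg :: "real \<Rightarrow> real" where "sg c \<equiv> sqrt 3 / 2 * c"

lemma K_mvt_hi:
  assumes "1 \<le> r1" "r1 \<le> r2" "r2 \<le> 1105/1000" "K r2 \<le> 10096/10000"
  shows "K r2 - K r1 \<le> (r2 - r1) / 4"
proof (cases "r1 = r2")
  case False
  hence "r1 < r2" using assms by simp
  then obtain z where z: "r1 < z" "z < r2" "K r2 - K r1 = (r2 - r1) * (K z * (z^2 - 1) / z)"
    using MVT2[of r1 r2 K "\<lambda>z. K z * (z^2 - 1) / z"] K_deriv assms by force
  have z1: "1 < z" using z assms by simp
  have Kz: "K z \<le> 10096/10000" using K_inc[of z r2] z assms by simp
  have "z^2 \<le> (1105/1000)^2" using z assms z1 by (intro power_mono) auto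
  hence zz: "z^2 - 1 \<le> 221025/1000000" by (simp add: power_divide)
  have zz0: "0 \<le> z^2 - 1" using z1 by (simp add: one_le_power)
  have Kz0: "0 \<le> K z" using K_pos[of z] z1 by simp
  have p: "0 \<le> K z * (z^2 - 1)" using Kz0 zz0 by simp
  have "K z * (z^2 - 1) / z \<le> K z * (z^2 - 1) / 1" using z1 p by (intro divide_left_mono) auto
  also have "\<dots> \<le> (10096/10000) * (221025/1000000)" using Kz zz Kz0 zz0 by (simp only: div_by_1, intro mult_mono) auto
  finally have "K z * (z^2 - 1) / z \<le> (10096/10000) * (221025/1000000)" .
  hence "K z * (z^2 - 1) / z \<le> 1/4" by linarith
  hence "(r2 - r1) * (K z * (z^2 - 1) / z) \<le> (r2 - r1) * (1/4)"
    using \<open>r1 < r2\<close> by (intro mult_left_mono) auto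
  thus ?thesis using z(3) by simp
qed simp

lemma K_mvt_lo:
  assumes "9/10 \<le> l2" "l2 \<le> l1" "l1 \<le> 1" "K l2 \<le> 10096/10000"
  shows "K l2 - K l1 \<le> (l1 - l2) / 4"
proof (cases "l1 = l2")
  case False
  hence "l2 < l1" using assms by simp
  then obtain z where z: "l2 < z" "z < l1" "K l1 - K l2 = (l1 - l2) * (K z * (z^2 - 1) / z)"
    using MVT2[of l2 l1 K "\<lambda>z. K z * (z^2 - 1) / z"] K_deriv assms by force
  have z1: "9/10 < z" "z < 1" using z assms by auto
  have Kz: "K z \<le> 10096/10000" using K_dec[of l2 z] z assms by simp
  have "(9/10)^2 \<le> z^2" using z1 by (intro power_mono) auto
  hence zz: "1 - z^2 \<le> 19/100" by (simp add: power_divide)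
  have zz0: "0 \<le> 1 - z^2" using z1 by (simp add: power_le_one)
  have Kz0: "0 \<le> K z" using K_pos[of z] z1 by simp
  have "K z * (1 - z^2) / z \<le> K z * (1 - z^2) / (9/10)" using z1 Kz0 zz0
    by (intro divide_left_mono) auto
  also have "\<dots> \<le> (10096/10000) * (19/100) / (9/10)" using Kz zz Kz0 zz0
    by (intro divide_right_mono mult_mono) auto
  finally have "K z * (1 - z^2) / z \<le> 1/4" by simp
  hence "- (K z * (z^2 - 1) / z) \<le> 1/4" by (simp add: algebra_simps minus_divide_left)
  hence "(l1 - l2) * (- (K z * (z^2 - 1) / z)) \<le> (l1 - l2) * (1/4)"
    using \<open>l2 < l1\<close> by (intro mult_left_mono) auto
  moreover have "K l2 - K l1 = (l1 - l2) * (- (K z * (z^2 - 1) / z))" using z(3) by (simp add: algebra_simps)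
  ultimately show ?thesis by simp
qed simp

definition Jf :: "real \<Rightarrow> real" where "Jf c = integral {R_minus (sg c) .. 1} (fc c)"
definition Ipf :: "real \<Rightarrow> real" where "Ipf c = integral {1 .. R_plus (sg c)} (fc c)"

lemma cI: assumes "c_star \<le> c" "c \<le> c_bar"
  shows "0 < c" "1 \<le> sg c" "sg c \<le> 10096/10000" "sg c < c" "c \<le> 11657/10000" "115/100 \<le> c"
proof -
  show c0: "0 < c" using cstar_pos assms by linarith
  show "1 \<le> sg c" using sigma_ge1 assms by simp
  show "sg c \<le> 10096/10000" using sigma_up assms by simp
  have "sqrt 3 < 2" by (rule real_sqrt_less_iff[THEN iffD2, of 3 4, simplified])
  thus "sg c < c" using c0 by simp
  show "c \<le> 11657/10000" using cbar_up assms by simp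
  show "115/100 \<le> c" using cstar_lo assms by simp
qed

lemma fc_int: assumes "c_star \<le> c" "c \<le> c_bar" "R_minus (sg c) \<le> a" "b \<le> R_plus (sg c)"
  shows "fc c integrable_on {a..b}"
proof -
  have "continuous_on {a..b} (fc c)"
    using fc_cont[of "sg c" c] cI[OF assms(1,2)] assms(3,4) by (rule_tac continuous_on_subset) auto
  thus ?thesis by (rule integrable_continuous_interval)
qed

lemma h2_split: assumes "c_star \<le> c" "c \<le> c_bar" shows "h2 c = Jf c + Ipf c"
proof -
  have "R_minus (sg c) \<le> 1" "1 \<le> R_plus (sg c)" using Rm Rp cI[OF assms] by auto
  hence "integral {R_minus (sg c)..1} (fc c) + integral {1..R_plus (sg c)} (fc c)
      = integral {R_minus (sg c)..R_plus (sg c)} (fc c)"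
    by (rule Henstock_Kurzweil_Integration.integral_combine) (auto intro: fc_int[OF assms])
  thus ?thesis unfolding h2_fc Jf_def Ipf_def by simp
qed


lemma sdiff: assumes "c1 \<le> c2" shows "(866/1000) * (c2 - c1) \<le> sg c2 - sg c1" "sg c1 \<le> sg c2"
proof -
  have "sg c2 - sg c1 = sqrt 3 / 2 * (c2 - c1)" by (simp add: algebra_simps)
  moreover have "(866/1000) * (c2 - c1) \<le> sqrt 3 / 2 * (c2 - c1)"
    using sqrt3_lo assms by (intro mult_right_mono) auto
  ultimately show "(866/1000) * (c2 - c1) \<le> sg c2 - sg c1" by linarith
  show "sg c1 \<le> sg c2" using assms by (intro mult_left_mono) auto
qed

lemma Ip_est:
  assumes c: "c_star \<le> c1" "c1 \<le> c2" "c2 \<le> c_bar"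
  shows "Ipf c1 + 2 * (c2 - c1) \<le> Ipf c2"
proof -
  define s1 where "s1 = sg c1"
  define s2 where "s2 = sg c2"
  define r1 where "r1 = R_plus s1"
  define r2 where "r2 = R_plus s2"
  have c1I: "c_star \<le> c1" "c1 \<le> c_bar" using c by auto
  have c2I: "c_star \<le> c2" "c2 \<le> c_bar" using c by auto
  note C1 = cI[OF c1I] and C2 = cI[OF c2I]
  have s12: "s1 \<le> s2" "(866/1000) * (c2 - c1) \<le> s2 - s1" using sdiff[OF c(2)] by (auto simp: s1_def s2_def)
  have s1: "1 \<le> s1" "s1 \<le> 10096/10000" "s1 < c1" using C1 by (auto simp: s1_def)
  have s2: "1 \<le> s2" "s2 \<le> 10096/10000" "s2 < c2" using C2 by (auto simp: s2_def)
  have r: "1 \<le> r1" "r1 \<le> r2" "r2 \<le> 1105/1000"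
    using Rp(1)[OF s1(1)] Rp_mono[OF s1(1) s12(1)] Rp_up[OF s2(1,2)] by (auto simp: r1_def r2_def)
  have Kr: "K r1 = s1" "K r2 = s2" using Rp s1 s2 by (auto simp: r1_def r2_def)
  have "s2 - s1 \<le> (r2 - r1) / 4" using K_mvt_hi[OF r] Kr s2 by simp
  hence rdiff: "4 * ((866/1000) * (c2 - c1)) \<le> r2 - r1" using s12 by simp
  have Rm2: "R_minus s2 \<le> 1" using Rm s2 by simp
  have Rm1: "R_minus s1 \<le> 1" using Rm s1 by simp
  have int2: "fc c2 integrable_on {1..r2}" using fc_int[OF c2I] Rm2 by (simp add: s2_def r2_def)
  have int2b: "fc c2 integrable_on {r1..r2}" using fc_int[OF c2I] Rm2 r by (simp add: s2_def r2_def)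
  have int2a: "fc c2 integrable_on {1..r1}" using fc_int[OF c2I] Rm2 r Rp_mono[OF s1(1) s12(1)]
    by (simp add: s2_def r1_def s1_def)
  have int1: "fc c1 integrable_on {1..r1}" using fc_int[OF c1I] Rm1 by (simp add: s1_def r1_def)
  have split: "Ipf c2 = integral {1..r1} (fc c2) + integral {r1..r2} (fc c2)"
    unfolding Ipf_def using r int2 by (simp add: Henstock_Kurzweil_Integration.integral_combine s2_def r2_def)
  have low: "(r2 - r1) * (7763/10000) \<le> integral {r1..r2} (fc c2)"
  proof -
    have "integral {r1..r2} (\<lambda>_. 7763/10000) \<le> integral {r1..r2} (fc c2)"
    proof (rule integral_le)
      fix R assume R: "R \<in> {r1..r2}"
      have R0: "0 < R" "R \<le> 1105/1000" using R r by auto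
      have "K R \<le> s2" using K_le_between[OF s2(1)] R Rm2 r by (auto simp: r2_def)
      hence "K R < c2" using s2 by simp
      hence "1 / (R * c2) \<le> fc c2 R" using fc_lower R0 by simp
      moreover have "1 / ((1105/1000) * (11657/10000)) \<le> 1 / (R * c2)"
        using R0 C2 by (intro divide_left_mono mult_mono mult_pos_pos) auto
      ultimately show "7763/10000 \<le> fc c2 R" by simp
    qed (use int2b in auto)
    thus ?thesis using r by simp
  qed
  define C where "C = (10096/10000) * (61/10) * (c2 - c1)"
  have C0: "0 \<le> C" using c by (simp add: C_def)
  have up: "integral {1..r1} (fc c1) \<le> integral {1..r1} (fc c2) + (r1 - 1) * C"
  proof -
    have intC: "(\<lambda>R. fc c2 R + C) integrable_on {1..r1}" by (rule integrable_add[OF int2a integrable_const_ivl])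
    have "integral {1..r1} (fc c1) \<le> integral {1..r1} (\<lambda>R. fc c2 R + C)"
    proof (rule integral_le)
      fix R assume R: "R \<in> {1..r1}"
      have R0: "0 < R" "1 \<le> R" using R by auto
      have KR: "K R \<le> s1" using K_le_between[OF s1(1)] R Rm1 by (auto simp: r1_def)
      have "fc c1 R \<le> fc c2 R + K R / R * (61/10) * (c2 - c1)"
        using fc_diff[OF c R0(1)] KR by (simp add: s1_def)
      moreover have "K R / R \<le> 10096/10000"
      proof -
        have "K R / R \<le> K R / 1" using R0 K_pos[OF R0(1)] by (intro divide_left_mono) auto
        thus ?thesis using KR s1 by linarith
      qed
      hence "K R / R * (61/10) * (c2 - c1) \<le> C" unfolding C_def using c
        by (intro mult_right_mono) auto
      ultimately show "fc c1 R \<le> fc c2 R + C" by simp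
    qed (simp_all add: int1 intC)
    also have "\<dots> = integral {1..r1} (fc c2) + integral {1..r1} (\<lambda>_. C)"
      by (rule integral_add[OF int2a integrable_const_ivl])
    also have "integral {1..r1} (\<lambda>_. C) = (r1 - 1) * C" using r by simp
    finally show ?thesis .
  qed
  have "(r1 - 1) * C \<le> (105/1000) * C" using r C0 by (intro mult_right_mono) auto
  moreover have "Ipf c1 = integral {1..r1} (fc c1)" by (simp add: Ipf_def r1_def s1_def)
  ultimately have "Ipf c2 - Ipf c1 \<ge> (r2 - r1) * (7763/10000) - (105/1000) * C"
    using split low up by linarith
  moreover have "(r2 - r1) * (7763/10000) \<ge> 4 * (866 / 1000 * (c2 - c1)) * (7763/10000)"
    using rdiff by (intro mult_right_mono) auto
  ultimately show ?thesis using C_def c(2) by argo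
qed

lemma J_mono:
  assumes c: "c_star \<le> c1" "c1 \<le> c2" "c2 \<le> c_bar"
  shows "Jf c1 \<le> Jf c2"
proof -
  define s1 where "s1 = sg c1"
  define s2 where "s2 = sg c2"
  define l1 where "l1 = R_minus s1"
  define l2 where "l2 = R_minus s2"
  have c1I: "c_star \<le> c1" "c1 \<le> c_bar" using c by auto
  have c2I: "c_star \<le> c2" "c2 \<le> c_bar" using c by auto
  note C1 = cI[OF c1I] and C2 = cI[OF c2I]
  have s12: "s1 \<le> s2" "(866/1000) * (c2 - c1) \<le> s2 - s1" using sdiff[OF c(2)] by (auto simp: s1_def s2_def)
  have s1: "1 \<le> s1" "s1 \<le> 10096/10000" "s1 < c1" using C1 by (auto simp: s1_def)
  have s2: "1 \<le> s2" "s2 \<le> 10096/10000" "s2 < c2" using C2 by (auto simp: s2_def)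
  have l: "9/10 \<le> l2" "l2 \<le> l1" "l1 \<le> 1"
    using Rm_lo09[OF s2(1,2)] Rm_anti[OF s1(1) s12(1)] Rm(2)[OF s1(1)] by (auto simp: l1_def l2_def)
  have Kl: "K l1 = s1" "K l2 = s2" using Rm s1 s2 by (auto simp: l1_def l2_def)
  have "s2 - s1 \<le> (l1 - l2) / 4" using K_mvt_lo[OF l] Kl s2 by simp
  hence ldiff: "4 * ((866/1000) * (c2 - c1)) \<le> l1 - l2" using s12 by simp
  have Rp2: "1 \<le> R_plus s2" using Rp s2 by simp
  have Rp1: "1 \<le> R_plus s1" using Rp s1 by simp
  have int2: "fc c2 integrable_on {l2..1}" using fc_int[OF c2I] Rp2 by (simp add: s2_def l2_def)
  have int2b: "fc c2 integrable_on {l2..l1}" using fc_int[OF c2I] Rp2 l by (simp add: s2_def l2_def)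
  have int2a: "fc c2 integrable_on {l1..1}" using fc_int[OF c2I] Rp2 l Rm_anti[OF s1(1) s12(1)]
    by (simp add: s2_def l1_def s1_def)
  have int1: "fc c1 integrable_on {l1..1}" using fc_int[OF c1I] Rp1 by (simp add: s1_def l1_def)
  have split: "Jf c2 = integral {l2..l1} (fc c2) + integral {l1..1} (fc c2)"
    unfolding Jf_def using l int2 by (simp add: Henstock_Kurzweil_Integration.integral_combine s2_def l2_def)
  have low: "(l1 - l2) * (85/100) \<le> integral {l2..l1} (fc c2)"
  proof -
    have "integral {l2..l1} (\<lambda>_. 85/100) \<le> integral {l2..l1} (fc c2)"
    proof (rule integral_le)
      fix R assume R: "R \<in> {l2..l1}"
      have R0: "0 < R" "R \<le> 1" using R l by auto
      have "K R \<le> s2" using K_le_between[OF s2(1)] R Rp2 l by (auto simp: l2_def)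
      hence "K R < c2" using s2 by simp
      hence "1 / (R * c2) \<le> fc c2 R" using fc_lower R0 by simp
      moreover have "1 / (1 * (11657/10000)) \<le> 1 / (R * c2)"
        using R0 C2 by (intro divide_left_mono mult_mono mult_pos_pos) auto
      ultimately show "85/100 \<le> fc c2 R" by simp
    qed (use int2b in auto)
    thus ?thesis using l by simp
  qed
  define C where "C = (113/100) * (61/10) * (c2 - c1)"
  have C0: "0 \<le> C" using c by (simp add: C_def)
  have up: "integral {l1..1} (fc c1) \<le> integral {l1..1} (fc c2) + (1 - l1) * C"
  proof -
    have intC: "(\<lambda>R. fc c2 R + C) integrable_on {l1..1}" by (rule integrable_add[OF int2a integrable_const_ivl])
    have "integral {l1..1} (fc c1) \<le> integral {l1..1} (\<lambda>R. fc c2 R + C)"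
    proof (rule integral_le)
      fix R assume R: "R \<in> {l1..1}"
      have R0: "0 < R" "9/10 \<le> R" using R l by auto
      have KR: "K R \<le> s1" using K_le_between[OF s1(1)] R Rp1 by (auto simp: l1_def)
      have "fc c1 R \<le> fc c2 R + K R / R * (61/10) * (c2 - c1)"
        using fc_diff[OF c R0(1)] KR by (simp add: s1_def)
      moreover have "K R / R \<le> 113/100"
      proof -
        have "K R / R \<le> K R / (9/10)" using R0 K_pos[OF R0(1)] by (intro divide_left_mono) auto
        also have "\<dots> \<le> (10096/10000) / (9/10)" using KR s1 by (intro divide_right_mono) auto
        finally show ?thesis by simp
      qed
      hence "K R / R * (61/10) * (c2 - c1) \<le> C" unfolding C_def using c
        by (intro mult_right_mono) auto
      ultimately show "fc c1 R \<le> fc c2 R + C" by simp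
    qed (simp_all add: int1 intC)
    also have "\<dots> = integral {l1..1} (fc c2) + integral {l1..1} (\<lambda>_. C)"
      by (rule integral_add[OF int2a integrable_const_ivl])
    also have "integral {l1..1} (\<lambda>_. C) = (1 - l1) * C" using l by simp
    finally show ?thesis .
  qed
  have "(1 - l1) * C \<le> (1/10) * C" using l C0 by (intro mult_right_mono) auto
  moreover have "Jf c1 = integral {l1..1} (fc c1)" by (simp add: Jf_def l1_def s1_def)
  ultimately have "Jf c2 - Jf c1 \<ge> (l1 - l2) * (85/100) - (1/10) * C"
    using split low up by linarith
  moreover have "(l1 - l2) * (85/100) \<ge> 4 * (866 / 1000 * (c2 - c1)) * (85/100)"
    using ldiff by (intro mult_right_mono) auto
  ultimately show ?thesis using C_def c(2) by argo
qed

lemma h2_mono: "mono_on {c_star .. c_bar} h2"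
proof (rule mono_onI)
  fix c1 c2 assume "c1 \<in> {c_star..c_bar}" "c2 \<in> {c_star..c_bar}" "c1 \<le> c2"
  hence c: "c_star \<le> c1" "c1 \<le> c2" "c2 \<le> c_bar" by auto
  show "h2 c1 \<le> h2 c2"
    using h2_split[of c1] h2_split[of c2] Ip_est[OF c] J_mono[OF c] c by simp
qed

lemma poly_ineq: assumes "6/10 \<le> R" "R \<le> (1::real)"
  shows "(R^4 + 2*R^2 + 5) * (6*R^2 - R^4 - 1) \<le> 32 * R^3"
proof -
  have eq: "32 * R^3 - (R^4 + 2*R^2 + 5) * (6*R^2 - R^4 - 1) = (1 - R)^3 * (5 + 15*R + 2*R^2 - 2*R^3 - 3*R^4 - R^5)"
    by (simp add: algebra_simps power2_eq_square power3_eq_cube power4_eq_xxxx numeral_eq_Suc)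
  have R0: "0 \<le> R" using assms by simp
  have "R^3 \<le> 1" "R^4 \<le> 1" "R^5 \<le> 1" using assms R0 by (auto intro: power_le_one)
  hence "0 \<le> 5 + 15*R + 2*R^2 - 2*R^3 - 3*R^4 - R^5" using R0 assms zero_le_power2[of R] by linarith
  moreover have "0 \<le> (1 - R)^3" using assms by simp
  ultimately have "0 \<le> (1 - R)^3 * (5 + 15*R + 2*R^2 - 2*R^3 - 3*R^4 - R^5)" by (rule mult_nonneg_nonneg[rotated])
  thus ?thesis using eq by linarith
qed

lemma key_ineq: assumes "6/10 \<le> R" "R \<le> 1"
  shows "4 * R^2 * (K R - 1) \<le> K R * (1 - R^2)^2"
proof -
  define E where "E = exp ((R^2 - 1) / 2)"
  have R0: "0 < R" using assms by simp
  have "R^2 \<le> 1" using assms R0 by (simp add: power_le_one)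
  hence "(R^2 - 1)/2 \<le> 0" by simp
  hence EP: "E \<le> 1 + (R^2-1)/2 + ((R^2-1)/2)^2/2" unfolding E_def by (rule exp_up2_neg)
  have "(6/10)^2 \<le> R^2" using assms by (intro power_mono) auto
  hence "(1 - R^2)^2 \<le> 4 * R^2"
  proof -
    assume a: "(6/10)^2 \<le> R^2"
    have "0 \<le> 1 - R^2" using \<open>R^2 \<le> 1\<close> by simp
    hence "(1 - R^2) * (1 - R^2) \<le> (1 - R^2) * 1" by (intro mult_left_mono) auto
    hence "(1 - R^2)^2 \<le> (1 - R^2) * 1" by (simp only: power2_eq_square)
    also have "\<dots> \<le> 4 * R^2" using a by (simp add: power_divide)
    finally show ?thesis .
  qed
  hence D0: "0 \<le> 4 * R^2 - (1 - R^2)^2" by simp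
  have "E * (4 * R^2 - (1 - R^2)^2) \<le> (1 + (R^2-1)/2 + ((R^2-1)/2)^2/2) * (4 * R^2 - (1 - R^2)^2)"
    using EP D0 by (rule mult_right_mono)
  also have "\<dots> = (R^4 + 2*R^2 + 5) * (6*R^2 - R^4 - 1) / 8"
    by (simp add: algebra_simps power2_eq_square power4_eq_xxxx divide_simps) 
  also have "\<dots> \<le> 4 * R^3" using poly_ineq[OF assms] by simp
  finally have main: "E * (4 * R^2 - (1 - R^2)^2) \<le> 4 * R^3" .
  have KE: "K R = E / R" by (simp add: K_def E_def)
  have "R * (4 * R^2 * (K R - 1)) = 4 * R^2 * E - 4 * R^3" using R0
    by (simp add: KE field_simps power2_eq_square power3_eq_cube)
  also have "\<dots> \<le> E * (1 - R^2)^2" using main by (simp add: algebra_simps)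
  also have "\<dots> = R * (K R * (1 - R^2)^2)" using R0 by (simp add: KE)
  finally show ?thesis using R0 by simp
qed


lemma alg1: fixes k R :: real assumes "R \<noteq> 0"
  shows "(k*(R^2-1)/R)*(1-R^2)^2 - (k-1)*(2*(1-R^2)*(-2*R)) = (1-R^2)*((4*R^2*(k-1) - k*(1-R^2)^2)/R)"
proof -
  have "(k*(R^2-1)/R)*(1-R^2)^2 = (k*(R^2-1)*(1-R^2)^2)/R" by simp
  moreover have "(1-R^2)*((4*R^2*(k-1) - k*(1-R^2)^2)/R) = ((1-R^2)*(4*R^2*(k-1) - k*(1-R^2)^2))/R" by simp
  moreover have "(k-1)*(2*(1-R^2)*(-2*R)) = ((k-1)*(2*(1-R^2)*(-2*R)) * R) / R" using assms by simp
  moreover have "(k*(R^2-1)*(1-R^2)^2) - ((k-1)*(2*(1-R^2)*(-2*R)) * R) = ((1-R^2)*(4*R^2*(k-1) - k*(1-R^2)^2))"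
    by (simp add: algebra_simps power2_eq_square)
  ultimately show ?thesis by (metis diff_divide_distrib)
qed

definition Q :: "real \<Rightarrow> real" where "Q R = (K R - 1) / (1 - R^2)^2"

lemma Q_deriv: assumes "0 < R" "R < 1"
  shows "(Q has_real_derivative
     ((K R * (R^2 - 1) / R) * (1 - R^2)^2 - (K R - 1) * (2 * (1 - R^2) * (- 2 * R))) / ((1 - R^2)^2 * (1 - R^2)^2)) (at R)"
proof -
  have f: "((\<lambda>R. K R - 1) has_real_derivative (K R * (R^2 - 1) / R)) (at R)"
    using DERIV_diff[OF K_deriv[OF assms(1)] DERIV_const[of 1]] by simp
  have g: "((\<lambda>R. (1 - R^2)^2) has_real_derivative (2 * (1 - R^2) * (- 2 * R))) (at R)"
    by (auto intro!: derivative_eq_intros simp: power2_eq_square)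
  have "R^2 < 1" using assms using power_strict_mono[of R 1 2] by simp
  hence "(1 - R^2)^2 \<noteq> 0" by simp
  from DERIV_divide[OF f g this] show ?thesis unfolding Q_def[abs_def] .
qed

lemma Q_deriv_nonpos: assumes "6/10 \<le> R" "R < 1"
  shows "((K R * (R^2 - 1) / R) * (1 - R^2)^2 - (K R - 1) * (2 * (1 - R^2) * (- 2 * R))) / ((1 - R^2)^2 * (1 - R^2)^2) \<le> 0"
proof -
  have R0: "0 < R" using assms by simp
  have "R^2 < 1" using assms R0 using power_strict_mono[of R 1 2] by simp
  hence q: "0 < 1 - R^2" by simp
  have ki: "4 * R^2 * (K R - 1) \<le> K R * (1 - R^2)^2" using key_ineq assms by simp
  have "(K R * (R^2 - 1) / R) * (1 - R^2)^2 - (K R - 1) * (2 * (1 - R^2) * (- 2 * R))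
      = (1 - R^2) * ((4 * R^2 * (K R - 1) - K R * (1 - R^2)^2) / R)"
    using R0 by (intro alg1) auto
  also have "\<dots> \<le> 0" using q ki R0
    by (intro mult_nonneg_nonpos divide_nonpos_pos) auto
  finally show ?thesis by (rule divide_nonpos_nonneg) simp
qed

lemma Q_anti: assumes "6/10 \<le> a" "a \<le> b" "b < 1" shows "Q b \<le> Q a"
proof -
  have d: "\<And>x. a \<le> x \<Longrightarrow> x \<le> b \<Longrightarrow> (Q has_real_derivative
     ((K x * (x^2 - 1) / x) * (1 - x^2)^2 - (K x - 1) * (2 * (1 - x^2) * (- 2 * x))) / ((1 - x^2)^2 * (1 - x^2)^2)) (at x)"
    using Q_deriv assms by simp
  have "continuous_on {a..b} Q"
    using d by (meson DERIV_isCont atLeastAtMost_iff continuous_at_imp_continuous_on)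
  show ?thesis
  proof (rule DERIV_nonpos_imp_decreasing_open[OF assms(2) _ \<open>continuous_on {a..b} Q\<close>])
    fix x assume x: "a < x" "x < b"
    show "\<exists>y. DERIV Q x :> y \<and> y \<le> 0"
      by (rule exI, rule conjI, rule d, use x in simp, use x in simp, rule Q_deriv_nonpos) (use x assms in auto)
  qed
qed

definition Rm' :: "real \<Rightarrow> real" where "Rm' s = R_minus (max 1 s)"

definition rho :: "real \<Rightarrow> real" where "rho x = sqrt x / (1 - (Rm' (1 + x))^2)"

lemma Rm'_anti: "s1 \<le> s2 \<Longrightarrow> Rm' s2 \<le> Rm' s1"
  unfolding Rm'_def by (rule Rm_anti) auto

lemma Rm'_bounds: "0 < Rm' s" "Rm' s \<le> 1"
  unfolding Rm'_def using Rm[of "max 1 s"] by auto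

lemma rho_nonneg: assumes "0 \<le> x" shows "0 \<le> rho x"
proof -
  have "Rm' (1 + x)^2 \<le> 1" using Rm'_bounds[of "1+x"] by (simp add: power_le_one)
  thus ?thesis unfolding rho_def using assms by (intro divide_nonneg_nonneg) auto
qed

lemma rho_Q: assumes "0 < x" "x \<le> 1657/10000"
  shows "rho x = sqrt (Q (R_minus (1 + x)))" "6/10 \<le> R_minus (1 + x)" "R_minus (1 + x) < 1"
proof -
  define R where "R = R_minus (1 + x)"
  have R: "0 < R" "R \<le> 1" "K R = 1 + x" using Rm[of "1+x"] assms by (auto simp: R_def)
  have "R \<noteq> 1" using R assms by auto
  hence R1: "R < 1" using R by simp
  have R6: "6/10 \<le> R" using Rm_lo06[of "1+x"] assms by (simp add: R_def)
  have "R^2 < 1" using R R1 using power_strict_mono[of R 1 2] by simp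
  hence q: "0 < 1 - R^2" by simp
  have "Rm' (1 + x) = R" using assms by (simp add: Rm'_def R_def max_def)
  hence "rho x = sqrt x / (1 - R^2)" by (simp add: rho_def)
  also have "\<dots> = sqrt (x / (1 - R^2)^2)" using q by (simp add: real_sqrt_divide)
  also have "x / (1 - R^2)^2 = Q R" using R by (simp add: Q_def)
  finally show "rho x = sqrt (Q (R_minus (1 + x)))" by (simp add: Q_def R_def)
  show "6/10 \<le> R_minus (1 + x)" "R_minus (1 + x) < 1" using R6 R1 by (auto simp: R_def)
qed

lemma rho0: "rho 0 = 0" by (simp add: rho_def)

lemma rho_mono: assumes "0 \<le> x1" "x1 \<le> x2" "x2 \<le> 1657/10000" shows "rho x1 \<le> rho x2"
proof (cases "x1 = 0")
  case True thus ?thesis using rho_nonneg[of x2] assms by (simp add: rho0)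
next
  case False
  hence x1: "0 < x1" using assms by simp
  have x2: "0 < x2" using x1 assms by simp
  have "R_minus (1 + x2) \<le> R_minus (1 + x1)" using assms by (intro Rm_anti) auto
  hence "Q (R_minus (1 + x1)) \<le> Q (R_minus (1 + x2))"
    using rho_Q[OF x1] rho_Q[OF x2] assms by (intro Q_anti) auto
  thus ?thesis using rho_Q[OF x1] rho_Q[OF x2] assms by simp
qed

lemma rho_bound: assumes "0 \<le> x" "x \<le> 1657/10000" shows "rho x \<le> 74/100"
proof (cases "x = 0")
  case True thus ?thesis by (simp add: rho0)
next
  case False
  hence x: "0 < x" using assms by simp
  have "Q (R_minus (1 + x)) \<le> Q (6/10)"
    using rho_Q[OF x] assms by (intro Q_anti) auto
  also have "Q (6/10) \<le> (22/100) / ((1 - (6/10)^2)^2)"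
    unfolding Q_def using K_06_up by (intro divide_right_mono) auto
  also have "\<dots> \<le> (74/100)^2" by (simp add: power_divide)
  finally have "sqrt (Q (R_minus (1 + x))) \<le> sqrt ((74/100)^2)" by (rule real_sqrt_le_mono)
  also have "sqrt ((74/100)^2) = (74/100::real)" by simp
  finally show ?thesis using rho_Q[OF x] assms by simp
qed

definition phi :: "real \<Rightarrow> real \<Rightarrow> real" where
  "phi c t = rho ((c - 1) * t) / sqrt (t * (1 - t) * (c + 1 + (c - 1) * t))"

definition ub :: "real \<Rightarrow> real" where "ub t = 1 / sqrt t + 1 / sqrt (1 - t)"

lemma w_le_ub: assumes "0 < t" "t < 1" shows "1 / sqrt (t * (1 - t)) \<le> ub t"
proof -
  define \<alpha> where "\<alpha> = sqrt t"
  define \<beta> where "\<beta> = sqrt (1 - t)"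
  have a: "0 < \<alpha>" "0 < \<beta>" using assms by (auto simp: \<alpha>_def \<beta>_def)
  have sq: "\<alpha>^2 + \<beta>^2 = 1" using assms by (simp add: \<alpha>_def \<beta>_def)
  have e: "(\<alpha> + \<beta>)^2 = \<alpha>^2 + \<beta>^2 + 2 * \<alpha> * \<beta>" by (rule power2_sum)
  have "0 < \<alpha> * \<beta>" using a by simp
  hence e1: "1 \<le> (\<alpha> + \<beta>)^2" using e sq by linarith
  have ab: "1 \<le> \<alpha> + \<beta>"
  proof (rule ccontr)
    assume "\<not> 1 \<le> \<alpha> + \<beta>"
    hence "\<alpha> + \<beta> < 1" by simp
    hence "(\<alpha> + \<beta>)^2 < 1^2" using a by (intro power_strict_mono) auto
    thus False using e1 by simp
  qed
  have "sqrt (t * (1 - t)) = \<alpha> * \<beta>" by (simp add: \<alpha>_def \<beta>_def real_sqrt_mult)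
  hence "1 / sqrt (t * (1 - t)) = 1 / (\<alpha> * \<beta>)" by simp
  also have "\<dots> \<le> (\<alpha> + \<beta>) / (\<alpha> * \<beta>)" using ab a by (intro divide_right_mono) auto
  also have "\<dots> = 1 / \<alpha> + 1 / \<beta>" using a by (simp add: field_simps)
  finally show ?thesis by (simp add: ub_def \<alpha>_def \<beta>_def)
qed

lemma phi_eq: assumes "0 < t" "t < 1" "1 \<le> c"
  shows "phi c t = rho ((c - 1) * t) * (1 / sqrt (t * (1 - t))) * (1 / sqrt (c + 1 + (c - 1) * t))"
  using assms by (simp add: phi_def real_sqrt_mult)

lemma phi_nonneg: assumes "0 \<le> t" "t \<le> 1" "1 \<le> c" shows "0 \<le> phi c t"
  unfolding phi_def using assms by (intro divide_nonneg_nonneg rho_nonneg) auto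

lemma xrange: assumes "c_star \<le> c" "c \<le> c_bar" "0 \<le> t" "t \<le> 1"
  shows "0 \<le> (c - 1) * t" "(c - 1) * t \<le> 1657/10000"
proof -
  have c: "115/100 \<le> c" "c \<le> 11657/10000" using cI[OF assms(1,2)] by auto
  show "0 \<le> (c - 1) * t" using c assms by simp
  have "(c - 1) * t \<le> (c - 1) * 1" using c assms by (intro mult_left_mono) auto
  hence "(c - 1) * t \<le> c - 1" by simp
  thus "(c - 1) * t \<le> 1657/10000" using c by linarith
qed

lemma phi_diff:
  assumes c: "c_star \<le> c1" "c1 \<le> c2" "c2 \<le> c_bar" and t: "0 < t" "t < 1"
  shows "phi c1 t \<le> phi c2 t + (235/1000) * (c2 - c1) * ub t"
proof -
  have c1I: "c_star \<le> c1" "c1 \<le> c_bar" and c2I: "c_star \<le> c2" "c2 \<le> c_bar" using c by auto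
  have C1: "115/100 \<le> c1" using cI[OF c1I] by simp
  define x1 where "x1 = (c1 - 1) * t"
  define x2 where "x2 = (c2 - 1) * t"
  have x1: "0 \<le> x1" "x1 \<le> 1657/10000" using xrange[OF c1I] t by (auto simp: x1_def)
  have x2: "0 \<le> x2" "x2 \<le> 1657/10000" using xrange[OF c2I] t by (auto simp: x2_def)
  have x12: "x1 \<le> x2" using c t by (simp add: x1_def x2_def mult_right_mono)
  define r1 where "r1 = rho x1"
  define r2 where "r2 = rho x2"
  have r: "0 \<le> r1" "r1 \<le> r2" "r1 \<le> 74/100"
    using rho_nonneg[OF x1(1)] rho_mono[OF x1(1) x12 x2(2)] rho_bound[OF x1] by (auto simp: r1_def r2_def)
  define A1 where "A1 = c1 + 1 + x1"
  define A2 where "A2 = c2 + 1 + x2"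
  have A1: "215/100 \<le> A1" using C1 x1 by (simp add: A1_def)
  have A12: "A1 \<le> A2" using c x12 by (simp add: A1_def A2_def)
  have A21: "A2 - A1 \<le> 2 * (c2 - c1)"
  proof -
    have "x2 - x1 = (c2 - c1) * t" by (simp add: x1_def x2_def algebra_simps)
    also have "\<dots> \<le> (c2 - c1) * 1" using c t by (intro mult_left_mono) auto
    finally show ?thesis by (simp add: A1_def A2_def)
  qed
  define a where "a = sqrt A1"
  define b where "b = sqrt A2"
  have a: "1466/1000 \<le> a" unfolding a_def using A1 by (intro real_le_rsqrt) (auto simp: power2_eq_square)
  have ab: "a \<le> b" using A12 by (simp add: a_def b_def)
  have "1/a - 1/b \<le> (b^2 - a^2) / (2 * a^3)" using a ab by (intro inv_diff_bound) auto
  also have "b^2 - a^2 = A2 - A1" using A1 A12 by (simp add: a_def b_def)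
  also have "(A2 - A1) / (2 * a^3) \<le> (2 * (c2 - c1)) / (2 * (1466/1000)^3)"
  proof (rule frac_le)
    show "0 \<le> 2 * (c2 - c1)" using c by simp
    show "A2 - A1 \<le> 2 * (c2 - c1)" by (rule A21)
    show "0 < 2 * (1466/1000::real)^3" by simp
    show "2 * (1466/1000)^3 \<le> 2 * a^3" using a by (intro mult_left_mono power_mono) auto
  qed
  also have "(2 * (c2 - c1)) / (2 * (1466/1000::real)^3) = (c2 - c1) / (1466/1000)^3"
    by (rule mult_divide_mult_cancel_left) simp
  also have "\<dots> = (c2 - c1) * (1 / (1466/1000)^3)" by simp
  also have "1 / (1466/1000::real)^3 \<le> 3175/10000" by (simp add: power_divide)
  hence "(c2 - c1) * (1 / (1466/1000)^3) \<le> (c2 - c1) * (3175/10000)" using c by (intro mult_left_mono) auto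
  finally have d: "1/a - 1/b \<le> (c2 - c1) * (3175/10000)" .
  define w where "w = 1 / sqrt (t * (1 - t))"
  have w: "0 \<le> w" "w \<le> ub t" using w_le_ub[OF t] t by (auto simp: w_def)
  have p1: "phi c1 t = r1 * w * (1/a)" using phi_eq[OF t] C1 by (simp add: r1_def x1_def w_def a_def A1_def)
  have p2: "phi c2 t = r2 * w * (1/b)" using phi_eq[OF t] C1 c by (simp add: r2_def x2_def w_def b_def A2_def)
  have b0: "0 \<le> 1/b" using ab a by simp
  have "1/b \<le> 1/a" using a ab by (intro divide_left_mono mult_pos_pos) auto
  hence nb: "0 \<le> 1/a - 1/b" by simp
  have "r1 * w * (1/b) \<le> r2 * w * (1/b)" using r w b0 by (intro mult_right_mono) auto
  hence "phi c1 t - phi c2 t \<le> r1 * w * (1/a) - r1 * w * (1/b)"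
    using p1 p2 by linarith
  also have "\<dots> = r1 * w * (1/a - 1/b)" by (simp add: algebra_simps)
  also have "\<dots> \<le> (74/100) * w * ((c2 - c1) * (3175/10000))"
    using r w d nb by (intro mult_mono) auto
  also have "\<dots> \<le> (74/100) * ub t * ((c2 - c1) * (3175/10000))"
    using w c by (intro mult_mono) auto
  also have "\<dots> \<le> (235/1000) * (c2 - c1) * ub t"
  proof -
    have "0 \<le> ub t" using w by simp
    hence "(74/100) * (3175/10000) * ((c2 - c1) * ub t) \<le> (235/1000) * ((c2 - c1) * ub t)"
      using c by (intro mult_right_mono) auto
    moreover have "(74/100) * ub t * ((c2 - c1) * (3175/10000)) = (74/100) * (3175/10000) * ((c2 - c1) * ub t)"
      by (simp only: mult_ac)
    moreover have "(235/1000) * (c2 - c1) * ub t = (235/1000) * ((c2 - c1) * ub t)"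
      by (simp only: mult_ac)
    ultimately show ?thesis by linarith
  qed
  finally show ?thesis by simp
qed

lemma phi_le_ub:
  assumes c: "c_star \<le> c" "c \<le> c_bar" and t: "0 < t" "t < 1"
  shows "phi c t \<le> ub t"
proof -
  have C: "115/100 \<le> c" using cI[OF c] by simp
  have x: "0 \<le> (c-1)*t" "(c-1)*t \<le> 1657/10000" using xrange[OF c] t by auto
  have r: "0 \<le> rho ((c-1)*t)" "rho ((c-1)*t) \<le> 74/100" using rho_nonneg rho_bound x by auto
  have "1 \<le> sqrt (c + 1 + (c - 1) * t)" using C x by simp
  hence s: "1 / sqrt (c + 1 + (c - 1) * t) \<le> 1" "0 \<le> 1 / sqrt (c + 1 + (c - 1) * t)" by auto
  define w where "w = 1 / sqrt (t * (1 - t))"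
  have w: "0 \<le> w" "w \<le> ub t" using w_le_ub[OF t] t by (auto simp: w_def)
  have "phi c t = rho ((c - 1) * t) * w * (1 / sqrt (c + 1 + (c - 1) * t))"
    using phi_eq[OF t] C by (simp add: w_def)
  also have "\<dots> \<le> 1 * w * 1" using r w s by (intro mult_mono) auto
  finally show ?thesis using w by simp
qed

lemma Rm'_meas[measurable]: "Rm' \<in> borel_measurable borel"
proof -
  have "mono (\<lambda>s. - Rm' s)" by (auto intro!: monoI simp: Rm'_anti)
  hence "(\<lambda>s. - Rm' s) \<in> borel_measurable borel" by (rule borel_measurable_mono)
  hence "(\<lambda>s. - (- Rm' s)) \<in> borel_measurable borel" by measurable
  thus ?thesis by simp
qed

lemma rho_meas[measurable]: "rho \<in> borel_measurable borel"
  unfolding rho_def[abs_def] by measurable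

lemma phi_meas[measurable]: "phi c \<in> borel_measurable borel"
  unfolding phi_def[abs_def] by measurable

lemma K_meas[measurable]: "K \<in> borel_measurable borel"
  unfolding K_def[abs_def] by measurable

lemma fc_meas[measurable]: "fc c \<in> borel_measurable borel"
  unfolding fc_def[abs_def] by measurable

definition hc :: "real \<Rightarrow> real \<Rightarrow> real" where "hc c \<psi> = 1 / (1 - (Rm' (c * sin \<psi>))^2)"

lemma hc_meas[measurable]: "hc c \<in> borel_measurable borel"
  unfolding hc_def[abs_def] by measurable

lemma ub_meas[measurable]: "ub \<in> borel_measurable borel"
  unfolding ub_def[abs_def] by measurable

lemma hc_nonneg: "0 \<le> hc c \<psi>"
proof -
  have "Rm' (c * sin \<psi>)^2 \<le> 1" using Rm'_bounds[of "c * sin \<psi>"] by (simp add: power_le_one)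
  thus ?thesis by (simp add: hc_def)
qed

lemma int_inv_sqrt: "(\<integral>\<^sup>+x. ennreal (indicator {0..1} x * (1 / sqrt x)) \<partial>lborel) = 2"
proof -
  have h: "((\<lambda>x::real. x powr (-1/2)) has_integral (1 powr (-1/2 + 1) / (-1/2 + 1))) {0..1}"
    by (rule has_integral_powr_from_0) auto
  have h2: "((\<lambda>x::real. 1 / sqrt x) has_integral 2) {0..1}"
  proof -
    have "((\<lambda>x::real. x powr (-1/2)) has_integral 2) {0..1}" using h by simp
    moreover have "x powr (-1/2) = 1 / sqrt x" if "x \<in> {0..1}" for x :: real
    proof (cases "x = 0")
      case False
      hence "0 < x" using that by simp
      thus ?thesis by (simp add: powr_minus_divide powr_half_sqrt)
    qed simp
    ultimately show ?thesis by (rule has_integral_cong[THEN iffD1, rotated]) simp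
  qed
  show ?thesis
    using nn_integral_has_integral_lebesgue[OF _ h2] by simp
qed


lemma int_inv_sqrt2: "(\<integral>\<^sup>+x. ennreal (indicator {0..1} x * (1 / sqrt (1 - x))) \<partial>lborel) = 2"
proof -
  have "(\<integral>\<^sup>+x. ennreal (indicator {0..1} x * (1 / sqrt (1 - x))) \<partial>lborel)
      = ennreal \<bar>-1\<bar> * (\<integral>\<^sup>+x. ennreal (indicator {0..1} (1 + (-1) * x) * (1 / sqrt (1 - (1 + (-1) * x)))) \<partial>lborel)"
    apply (rule nn_integral_real_affine)
     apply measurable
    done
  also have "(\<lambda>x::real. ennreal (indicator {0..1} (1 + (-1) * x) * (1 / sqrt (1 - (1 + (-1) * x)))))
      = (\<lambda>x. ennreal (indicator {0..1} x * (1 / sqrt x)))"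
  proof (rule ext)
    fix x :: real
    have "indicator {0..1} (1 + (-1) * x) = (indicator {0..1} x :: real)" by (auto simp: indicator_def)
    moreover have "1 - (1 + (-1) * x) = x" by simp
    ultimately show "ennreal (indicator {0..1} (1 + (-1) * x) * (1 / sqrt (1 - (1 + (-1) * x))))
      = ennreal (indicator {0..1} x * (1 / sqrt x))" by simp
  qed
  finally show ?thesis using int_inv_sqrt by simp
qed

lemma int_ub: "(\<integral>\<^sup>+x. ennreal (indicator {0..1} x * ub x) \<partial>lborel) = 4"
proof -
  have "(\<integral>\<^sup>+x. ennreal (indicator {0..1} x * ub x) \<partial>lborel)
     = (\<integral>\<^sup>+x. ennreal (indicator {0..1} x * (1 / sqrt x)) + ennreal (indicator {0..1} x * (1 / sqrt (1 - x))) \<partial>lborel)"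
  proof (rule nn_integral_cong)
    fix x :: real
    show "ennreal (indicator {0..1} x * ub x) = ennreal (indicator {0..1} x * (1 / sqrt x)) + ennreal (indicator {0..1} x * (1 / sqrt (1 - x)))"
    proof (cases "x \<in> {0..1}")
      case True
      hence nn: "0 \<le> 1 / sqrt x" "0 \<le> 1 / sqrt (1 - x)" by auto
      have "indicator {0..1} x * ub x = indicator {0..1} x * (1 / sqrt x) + indicator {0..1} x * (1 / sqrt (1 - x))"
        using True by (simp add: ub_def)
      thus ?thesis using True nn by (simp only: ennreal_plus) simp
    qed simp
  qed
  also have "\<dots> = (\<integral>\<^sup>+x. ennreal (indicator {0..1} x * (1 / sqrt x)) \<partial>lborel)
      + (\<integral>\<^sup>+x. ennreal (indicator {0..1} x * (1 / sqrt (1 - x))) \<partial>lborel)"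
    by (rule nn_integral_add) measurable
  also have "\<dots> = 4" using int_inv_sqrt int_inv_sqrt2 by simp
  finally show ?thesis .
qed

definition Phi :: "real \<Rightarrow> ennreal" where
  "Phi c = (\<integral>\<^sup>+t. ennreal (indicator {0..1} t * phi c t) \<partial>lborel)"

lemma Phi_diff:
  assumes c: "c_star \<le> c1" "c1 \<le> c2" "c2 \<le> c_bar"
  shows "Phi c1 \<le> Phi c2 + ennreal ((235/1000) * (c2 - c1)) * 4"
proof -
  have c1I: "c_star \<le> c1" "c1 \<le> c_bar" and c2I: "c_star \<le> c2" "c2 \<le> c_bar" using c by auto
  have C1: "1 \<le> c1" "1 \<le> c2" using cI[OF c1I] cI[OF c2I] by auto
  define k where "k = (235/1000) * (c2 - c1)"
  have k0: "0 \<le> k" using c by (simp add: k_def)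
  have pw: "ennreal (indicator {0..1} t * phi c1 t) \<le>
      ennreal (indicator {0..1} t * phi c2 t) + ennreal k * ennreal (indicator {0..1} t * ub t)" for t
  proof (cases "t \<in> {0<..<1}")
    case True
    hence t: "0 < t" "t < 1" by auto
    have "phi c1 t \<le> phi c2 t + k * ub t" using phi_diff[OF c t] by (simp add: k_def)
    moreover have "0 \<le> phi c2 t" using phi_nonneg t C1 by simp
    moreover have "0 \<le> ub t" using t by (simp add: ub_def)
    ultimately have "indicator {0..1} t * phi c1 t \<le> indicator {0..1} t * phi c2 t + k * (indicator {0..1} t * ub t)"
      using t by simp
    hence "ennreal (indicator {0..1} t * phi c1 t) \<le> ennreal (indicator {0..1} t * phi c2 t + k * (indicator {0..1} t * ub t))"
      by (rule ennreal_leI)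
    also have "\<dots> = ennreal (indicator {0..1} t * phi c2 t) + ennreal k * ennreal (indicator {0..1} t * ub t)"
      using t k0 \<open>0 \<le> phi c2 t\<close> \<open>0 \<le> ub t\<close> by (simp add: ennreal_plus ennreal_mult)
    finally show ?thesis .
  next
    case False
    hence z: "indicator {0..1} t * phi c1 t = 0"
      by (cases "t = 0"; cases "t = 1") (auto simp: indicator_def phi_def rho_def)
    show ?thesis by (simp only: z ennreal_0) (rule zero_le)
  qed
  have "Phi c1 \<le> (\<integral>\<^sup>+t. ennreal (indicator {0..1} t * phi c2 t) + ennreal k * ennreal (indicator {0..1} t * ub t) \<partial>lborel)"
    unfolding Phi_def by (rule nn_integral_mono) (rule pw)
  also have "\<dots> = Phi c2 + ennreal k * (\<integral>\<^sup>+t. ennreal (indicator {0..1} t * ub t) \<partial>lborel)"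
    unfolding Phi_def by (subst nn_integral_add) (auto simp: nn_integral_cmult)
  also have "\<dots> = Phi c2 + ennreal k * 4" by (simp add: int_ub)
  finally show ?thesis by (simp add: k_def)
qed

lemma Phi_finite:
  assumes c: "c_star \<le> c" "c \<le> c_bar"
  shows "Phi c \<le> 4"
proof -
  have "Phi c \<le> (\<integral>\<^sup>+t. ennreal (indicator {0..1} t * ub t) \<partial>lborel)"
    unfolding Phi_def
  proof (rule nn_integral_mono)
    fix t
    show "ennreal (indicator {0..1} t * phi c t) \<le> ennreal (indicator {0..1} t * ub t)"
    proof (cases "t \<in> {0<..<1}")
      case True
      thus ?thesis using phi_le_ub[OF c] by (auto intro!: ennreal_leI simp: indicator_def)
    next
      case False
      hence z: "indicator {0..1} t * phi c t = 0"
        by (cases "t = 0"; cases "t = 1") (auto simp: indicator_def phi_def rho_def)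
      show ?thesis by (simp only: z ennreal_0) (rule zero_le)
    qed
  qed
  thus ?thesis by (simp add: int_ub)
qed

lemma Rm'_lt1: assumes "1 < s" shows "Rm' s < 1"
proof -
  have "Rm' s = R_minus s" using assms by (simp add: Rm'_def max_def)
  moreover have "R_minus s \<noteq> 1" using Rm(3)[of s] assms by auto
  ultimately show ?thesis using Rm'_bounds[of s] by simp
qed

lemma phi_at: assumes "1 < c" "1 < s" "s < c"
  shows "phi c ((s - 1) / (c - 1)) = (c - 1) / ((1 - (Rm' s)^2) * sqrt (c^2 - s^2))"
proof -
  define t where "t = (s - 1) / (c - 1)"
  have ct: "(c - 1) * t = s - 1" using assms by (simp add: t_def)
  have c1: "c + 1 + (c - 1) * t = c + s" using ct by simp
  have tt: "t * (1 - t) * (c + s) = (s - 1) * (c^2 - s^2) / (c - 1)^2"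
    using assms by (simp add: t_def field_simps power2_eq_square)
  have q: "0 < 1 - (Rm' s)^2"
  proof -
    have "Rm' s < 1" "0 < Rm' s" using Rm'_lt1 assms Rm'_bounds by auto
    hence "(Rm' s)^2 < 1" using power_strict_mono[of "Rm' s" 1 2] by simp
    thus ?thesis by simp
  qed
  have s1: "0 < sqrt (s - 1)" using assms by simp
  have cs: "0 < sqrt (c^2 - s^2)" using assms by (simp add: power_strict_mono)
  have "sqrt (t * (1 - t) * (c + s)) = sqrt (s - 1) * sqrt (c^2 - s^2) / (c - 1)"
    using assms by (simp add: tt real_sqrt_mult real_sqrt_divide)
  moreover have "rho ((c - 1) * t) = sqrt (s - 1) / (1 - (Rm' s)^2)"
    by (simp add: ct rho_def)
  moreover have "phi c t = rho ((c - 1) * t) / sqrt (t * (1 - t) * (c + s))"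
    by (simp only: phi_def c1)
  ultimately have "phi c t = (sqrt (s - 1) / (1 - (Rm' s)^2)) / (sqrt (s - 1) * sqrt (c^2 - s^2) / (c - 1))"
    by simp
  also have "\<dots> = (c - 1) / ((1 - (Rm' s)^2) * sqrt (c^2 - s^2))"
    using s1 cs q assms by (simp add: field_simps)
  finally show ?thesis by (simp add: t_def)
qed


lemma canc3: fixes u v q :: real assumes "v \<noteq> 0" "u \<noteq> 0" shows "v / (q * u) * (u / v) = 1 / q"
  using assms by (cases "q = 0") (simp_all add: field_simps)

lemma sub_psi:
  assumes c: "c_star \<le> c" "c \<le> c_bar"
  shows "(\<integral>\<^sup>+t. ennreal (indicator {(sg c - 1) / (c - 1)..1} t * phi c t) \<partial>lborel)
       = (\<integral>\<^sup>+\<psi>. ennreal (indicator {pi/3..pi/2} \<psi> * hc c \<psi>) \<partial>lborel)"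
proof -
  note C = cI[OF c]
  have c1: "1 < c" using C by simp
  define g where "g = (\<lambda>\<psi>. (c * sin \<psi> - 1) / (c - 1))"
  define g' where "g' = (\<lambda>\<psi>. c * cos \<psi> / (c - 1))"
  have sub: "(\<integral>\<^sup>+x. phi c x * indicator {g (pi/3)..g (pi/2)} x \<partial>lborel)
      = (\<integral>\<^sup>+x. phi c (g x) * g' x * indicator {pi/3..pi/2} x \<partial>lborel)"
  proof (rule nn_integral_substitution)
    show "set_borel_measurable borel {g (pi/3)..g (pi/2)} (phi c)" unfolding set_borel_measurable_def by measurable
    show "(g has_real_derivative g' x) (at x)" for x
      unfolding g_def g'_def using c1 by (auto intro!: derivative_eq_intros)
    show "continuous_on {pi/3..pi/2} g'" unfolding g'_def using c1 by (intro continuous_intros) auto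
    show "0 \<le> g' x" if "x \<in> {pi/3..pi/2}" for x
      unfolding g'_def using that c1 by (intro divide_nonneg_pos mult_nonneg_nonneg cos_ge_zero) auto
    show "pi/3 \<le> pi/2" by simp
  qed
  have ga: "g (pi/3) = (sg c - 1) / (c - 1)" by (simp add: g_def sin_60)
  have gb: "g (pi/2) = 1" using c1 by (simp add: g_def)
  have "(\<integral>\<^sup>+t. ennreal (indicator {(sg c - 1) / (c - 1)..1} t * phi c t) \<partial>lborel)
      = (\<integral>\<^sup>+x. phi c x * indicator {g (pi/3)..g (pi/2)} x \<partial>lborel)"
    by (simp add: ga gb mult.commute)
  also note sub
  also have "(\<integral>\<^sup>+x. phi c (g x) * g' x * indicator {pi/3..pi/2} x \<partial>lborel)
      = (\<integral>\<^sup>+\<psi>. ennreal (indicator {pi/3..pi/2} \<psi> * hc c \<psi>) \<partial>lborel)"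
  proof (rule nn_integral_cong_AE)
    have "AE x in lborel. x \<noteq> pi/3 \<and> x \<noteq> pi/2"
      using AE_lborel_singleton[of "pi/3"] AE_lborel_singleton[of "pi/2"] by eventually_elim auto
    thus "AE x in lborel. ennreal (phi c (g x) * g' x * indicator {pi/3..pi/2} x)
        = ennreal (indicator {pi/3..pi/2} x * hc c x)"
    proof eventually_elim
      case (elim x)
      show ?case
      proof (cases "x \<in> {pi/3..pi/2}")
        case True
        hence x: "pi/3 < x" "x < pi/2" using elim by auto
        have "sin (pi/3) < sin x" using x by (intro sin_monotone_2pi) auto
        hence sx: "sqrt 3 / 2 < sin x" by (simp add: sin_60)
        have "sin x < sin (pi/2)" using x by (intro sin_monotone_2pi) auto
        hence sx1: "sin x < 1" by simp
        have cx: "0 < cos x" using x by (intro cos_gt_zero_pi) auto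
        define s where "s = c * sin x"
        have "sg c < s" using sx C by (simp add: s_def)
        hence s1: "1 < s" using C by simp
        have sc: "s < c" using sx1 C by (simp add: s_def)
        have gx: "g x = (s - 1) / (c - 1)" by (simp add: g_def s_def)
        have "c^2 - s^2 = (c * cos x)^2"
          by (simp add: s_def power_mult_distrib cos_squared_eq algebra_simps)
        hence sq: "sqrt (c^2 - s^2) = c * cos x" using cx C by simp
        have e1: "phi c (g x) * g' x = (c - 1) / ((1 - (Rm' s)^2) * (c * cos x)) * (c * cos x / (c - 1))"
          using phi_at[OF c1 s1 sc] gx sq by (simp add: g'_def)
        have u: "c * cos x \<noteq> 0" "c - 1 \<noteq> 0" using cx C by auto
        have e2: "(c - 1) / ((1 - (Rm' s)^2) * (c * cos x)) * (c * cos x / (c - 1)) = 1 / (1 - (Rm' s)^2)"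
          by (rule canc3[OF u(2) u(1)])
        show ?thesis using True e1 e2 by (simp add: hc_def s_def)
      qed simp
    qed
  qed
  finally show ?thesis .
qed


lemma canc4: fixes k r q v w :: real assumes "v \<noteq> 0" "q \<noteq> 0" "r \<noteq> 0"
  shows "v / (q * w) * (k * (- q) / r * (-1) / v) = k / (r * w)"
  using assms by (cases "w = 0") (simp_all add: field_simps)

lemma sub_R:
  assumes c: "c_star \<le> c" "c \<le> c_bar"
  shows "(\<integral>\<^sup>+t. ennreal (indicator {0..(sg c - 1) / (c - 1)} t * phi c t) \<partial>lborel)
       = (\<integral>\<^sup>+R. ennreal (indicator {R_minus (sg c)..1} R * fc c R) \<partial>lborel)"
proof -
  note C = cI[OF c]
  have c1: "1 < c" using C by simp
  define m where "m = R_minus (sg c)"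
  have m: "0 < m" "m \<le> 1" "K m = sg c" using Rm[of "sg c"] C by (auto simp: m_def)
  define g where "g = (\<lambda>u. (K (- u) - 1) / (c - 1))"
  define g' where "g' = (\<lambda>u. (K (- u) * ((- u)^2 - 1) / (- u) * (- 1) - 0) / (c - 1))"
  have Kc: "continuous_on {-1..-m} (\<lambda>x. K (- x))"
    by (rule continuous_on_compose2[OF K_cont[of m 1]]) (use m in \<open>auto intro!: continuous_intros\<close>)
  have sub: "(\<integral>\<^sup>+x. phi c x * indicator {g (-1)..g (-m)} x \<partial>lborel)
      = (\<integral>\<^sup>+x. phi c (g x) * g' x * indicator {-1..-m} x \<partial>lborel)"
  proof (rule nn_integral_substitution)
    show "set_borel_measurable borel {g (-1)..g (-m)} (phi c)" unfolding set_borel_measurable_def by measurable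
    show "(g has_real_derivative g' x) (at x)" if "x \<in> {-1..-m}" for x
    proof -
      have x: "0 < - x" using that m by auto
      have "((\<lambda>u. K (- u)) has_real_derivative (K (- x) * ((- x)^2 - 1) / (- x)) * (- 1)) (at x)"
        by (rule DERIV_chain2[where f=K and g="\<lambda>u. - u", OF K_deriv[OF x]]) (auto intro!: derivative_eq_intros)
      from DERIV_cdivide[OF DERIV_diff[OF this DERIV_const[of 1]], of "c - 1"]
      show ?thesis unfolding g_def g'_def .
    qed
    show "continuous_on {-1..-m} g'" unfolding g'_def using c1 m
      by (intro continuous_intros Kc) auto
    show "0 \<le> g' x" if "x \<in> {-1..-m}" for x
    proof -
      have x: "0 < - x" "- x \<le> 1" using that m by auto
      have "(- x)^2 \<le> 1^2" using x by (intro power_mono) auto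
      hence "(- x)^2 \<le> 1" by simp
      hence "0 \<le> K (- x) * (1 - (- x)^2) / (- x)" using K_pos[OF x(1)] x
        by (intro divide_nonneg_pos mult_nonneg_nonneg) auto
      moreover have "K (- x) * ((- x)^2 - 1) / (- x) * (- 1) = K (- x) * (1 - (- x)^2) / (- x)"
        by (simp add: algebra_simps)
      ultimately have "0 \<le> K (- x) * ((- x)^2 - 1) / (- x) * (- 1) - 0" by linarith
      thus ?thesis unfolding g'_def using c1 by (intro divide_nonneg_pos) auto
    qed
    show "-1 \<le> - m" using m by simp
  qed
  have ga: "g (-1) = 0" by (simp add: g_def)
  have gb: "g (-m) = (sg c - 1) / (c - 1)" by (simp add: g_def m)
  have "(\<integral>\<^sup>+t. ennreal (indicator {0..(sg c - 1) / (c - 1)} t * phi c t) \<partial>lborel)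
      = (\<integral>\<^sup>+x. phi c x * indicator {g (-1)..g (-m)} x \<partial>lborel)"
    by (simp add: ga gb mult.commute)
  also note sub
  also have "(\<integral>\<^sup>+x. phi c (g x) * g' x * indicator {-1..-m} x \<partial>lborel)
      = (\<integral>\<^sup>+x. ennreal (indicator {m..1} (0 + (-1) * x) * fc c (0 + (-1) * x)) \<partial>lborel)"
  proof (rule nn_integral_cong_AE)
    have "AE x in lborel. x \<noteq> -1 \<and> x \<noteq> -m"
      using AE_lborel_singleton[of "-1"] AE_lborel_singleton[of "-m"] by eventually_elim auto
    thus "AE x in lborel. ennreal (phi c (g x) * g' x * indicator {-1..-m} x)
        = ennreal (indicator {m..1} (0 + (-1) * x) * fc c (0 + (-1) * x))"
    proof eventually_elim
      case (elim x)
      show ?case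
      proof (cases "x \<in> {-1..-m}")
        case True
        define R where "R = - x"
        have R: "m < R" "R < 1" using True elim by (auto simp: R_def)
        have R0: "0 < R" using R m by simp
        define s where "s = K R"
        have s1: "1 < s" using K_dec[OF R0 R(2)] by (simp add: s_def)
        have s2: "s < sg c" using K_dec[OF m(1) R(1)] R m by (simp add: s_def)
        hence sc: "s < c" using C by simp
        have gx: "g x = (s - 1) / (c - 1)" by (simp add: g_def s_def R_def)
        have Rms: "Rm' s = R" using s1 Rm_K[OF R0] R by (simp add: Rm'_def s_def max_def)
        have "R^2 < 1" using R R0 power_strict_mono[of R 1 2] by simp
        hence q: "1 - R^2 \<noteq> 0" by simp
        have "phi c (g x) * g' x = (c - 1) / ((1 - R^2) * sqrt (c^2 - (K R)^2))
            * (K R * (- (1 - R^2)) / R * (- 1) / (c - 1))"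
          using phi_at[OF c1 s1 sc] gx Rms by (simp add: g'_def R_def s_def algebra_simps)
        also have "\<dots> = K R / (R * sqrt (c^2 - (K R)^2))"
          using c1 q R0 by (intro canc4) auto
        also have "\<dots> = fc c R" by (simp add: fc_def)
        finally show ?thesis using True R m by (simp add: R_def indicator_def)
      next
        case False
        hence "0 + (-1) * x \<notin> {m..1}" by auto
        thus ?thesis using False by simp
      qed
    qed
  qed
  also have "\<dots> = (\<integral>\<^sup>+R. ennreal (indicator {m..1} R * fc c R) \<partial>lborel)"
  proof -
    have "(\<integral>\<^sup>+R. ennreal (indicator {m..1} R * fc c R) \<partial>lborel)
        = ennreal \<bar>-1\<bar> * (\<integral>\<^sup>+x. ennreal (indicator {m..1} (0 + (-1) * x) * fc c (0 + (-1) * x)) \<partial>lborel)"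
      apply (rule nn_integral_real_affine)
       apply measurable
      done
    thus ?thesis by simp
  qed
  finally show ?thesis by (simp add: m_def)
qed

lemma fc_nonneg: assumes "0 < R" "K R \<le> c" shows "0 \<le> fc c R"
proof -
  have "(K R)^2 \<le> c^2" using assms K_pos[of R] by (intro power_mono) auto
  thus ?thesis unfolding fc_def using K_pos[of R] assms by (intro divide_nonneg_nonneg mult_nonneg_nonneg) auto
qed

lemma tsig: assumes c: "c_star \<le> c" "c \<le> c_bar"
  shows "0 \<le> (sg c - 1) / (c - 1)" "(sg c - 1) / (c - 1) \<le> 1"
  using cI[OF c] by (auto simp: divide_le_eq)

lemma Phi_split:
  assumes c: "c_star \<le> c" "c \<le> c_bar"
  shows "Phi c = (\<integral>\<^sup>+t. ennreal (indicator {0..(sg c - 1) / (c - 1)} t * phi c t) \<partial>lborel)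
     + (\<integral>\<^sup>+t. ennreal (indicator {(sg c - 1) / (c - 1)..1} t * phi c t) \<partial>lborel)"
proof -
  define \<tau> where "\<tau> = (sg c - 1) / (c - 1)"
  have \<tau>: "0 \<le> \<tau>" "\<tau> \<le> 1" using tsig[OF c] by (auto simp: \<tau>_def)
  have C1: "1 \<le> c" using cI[OF c] by simp
  have "Phi c = (\<integral>\<^sup>+t. ennreal (indicator {0..\<tau>} t * phi c t) + ennreal (indicator {\<tau>..1} t * phi c t) \<partial>lborel)"
    unfolding Phi_def
  proof (rule nn_integral_cong_AE)
    show "AE t in lborel. ennreal (indicator {0..1} t * phi c t)
       = ennreal (indicator {0..\<tau>} t * phi c t) + ennreal (indicator {\<tau>..1} t * phi c t)"
      using AE_lborel_singleton[of \<tau>]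
    proof eventually_elim
      case (elim t)
      show ?case
      proof (cases "t \<in> {0..1}")
        case True
        have p: "0 \<le> phi c t" using phi_nonneg True C1 by auto
        show ?thesis
        proof (cases "t < \<tau>")
          case True
          thus ?thesis using \<open>t \<in> {0..1}\<close> by (simp add: indicator_def)
        next
          case False
          hence "\<tau> < t" using elim by simp
          thus ?thesis using \<open>t \<in> {0..1}\<close> by (simp add: indicator_def)
        qed
      next
        case False
        hence "t \<notin> {0..\<tau>}" "t \<notin> {\<tau>..1}" using \<tau> by auto
        thus ?thesis using False by simp
      qed
    qed
  qed
  also have "\<dots> = (\<integral>\<^sup>+t. ennreal (indicator {0..\<tau>} t * phi c t) \<partial>lborel)
     + (\<integral>\<^sup>+t. ennreal (indicator {\<tau>..1} t * phi c t) \<partial>lborel)"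
    by (rule nn_integral_add) measurable
  finally show ?thesis by (simp add: \<tau>_def)
qed

lemma Jf_nn:
  assumes c: "c_star \<le> c" "c \<le> c_bar"
  shows "(\<integral>\<^sup>+R. ennreal (indicator {R_minus (sg c)..1} R * fc c R) \<partial>lborel) = ennreal (Jf c)"
    "0 \<le> Jf c"
proof -
  note C = cI[OF c]
  have m: "0 < R_minus (sg c)" "1 \<le> R_plus (sg c)" using Rm Rp C by auto
  have int: "fc c integrable_on {R_minus (sg c)..1}" using fc_int[OF c] m by simp
  have nn: "0 \<le> fc c x" if "x \<in> {R_minus (sg c)..1}" for x
  proof -
    have "K x \<le> sg c" using K_le_between[of "sg c" x] that m C by auto
    thus ?thesis using fc_nonneg[of x c] that m C by auto
  qed
  show "(\<integral>\<^sup>+R. ennreal (indicator {R_minus (sg c)..1} R * fc c R) \<partial>lborel) = ennreal (Jf c)"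
    unfolding Jf_def by (rule nn_integral_has_integral_lebesgue[OF nn integrable_integral[OF int]])
  show "0 \<le> Jf c" unfolding Jf_def using int nn by (intro integral_nonneg) auto
qed


definition Ah :: "real \<Rightarrow> ennreal" where
  "Ah c = (\<integral>\<^sup>+\<psi>. ennreal (indicator {pi/3..pi/2} \<psi> * hc c \<psi>) \<partial>lborel)"

lemma Phi_eq: assumes c: "c_star \<le> c" "c \<le> c_bar"
  shows "Phi c = ennreal (Jf c) + Ah c"
  using Phi_split[OF c] sub_R[OF c] sub_psi[OF c] Jf_nn[OF c] by (simp add: Ah_def)

lemma Ah_fin: assumes c: "c_star \<le> c" "c \<le> c_bar"
  shows "Ah c \<le> 4"
proof -
  have "Ah c \<le> ennreal (Jf c) + Ah c" by simp
  also have "\<dots> = Phi c" using Phi_eq[OF c] by simp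
  also have "\<dots> \<le> 4" by (rule Phi_finite[OF c])
  finally show ?thesis .
qed

lemma sin_ge: assumes "\<psi> \<in> {pi/3..2*pi/3}" shows "sqrt 3 / 2 \<le> sin \<psi>"
proof (cases "\<psi> \<le> pi/2")
  case True
  hence "sin (pi/3) \<le> sin \<psi>" using assms by (intro sin_monotone_2pi_le) auto
  thus ?thesis by (simp add: sin_60)
next
  case False
  hence "sin (pi/3) \<le> sin (pi - \<psi>)" using assms by (intro sin_monotone_2pi_le) auto
  thus ?thesis by (simp add: sin_60)
qed

lemma A2_eq: assumes c: "c_star \<le> c" "c \<le> c_bar"
  shows "(\<integral>\<^sup>+\<psi>. ennreal (indicator {pi/3..2*pi/3} \<psi> * hc c \<psi>) \<partial>lborel) = 2 * Ah c"
proof -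
  have "(\<integral>\<^sup>+\<psi>. ennreal (indicator {pi/3..2*pi/3} \<psi> * hc c \<psi>) \<partial>lborel)
     = (\<integral>\<^sup>+\<psi>. ennreal (indicator {pi/3..pi/2} \<psi> * hc c \<psi>) + ennreal (indicator {pi/2..2*pi/3} \<psi> * hc c \<psi>) \<partial>lborel)"
  proof (rule nn_integral_cong_AE)
    show "AE t in lborel. ennreal (indicator {pi/3..2*pi/3} t * hc c t)
       = ennreal (indicator {pi/3..pi/2} t * hc c t) + ennreal (indicator {pi/2..2*pi/3} t * hc c t)"
      using AE_lborel_singleton[of "pi/2"]
    proof eventually_elim
      case (elim t)
      have p: "0 \<le> hc c t" by (rule hc_nonneg)
      show ?case
      proof (cases "t < pi/2")
        case True
        thus ?thesis by (auto simp: indicator_def)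
      next
        case False
        hence "pi/2 < t" using elim by simp
        thus ?thesis by (auto simp: indicator_def)
      qed
    qed
  qed
  also have "\<dots> = Ah c + (\<integral>\<^sup>+\<psi>. ennreal (indicator {pi/2..2*pi/3} \<psi> * hc c \<psi>) \<partial>lborel)"
    unfolding Ah_def by (rule nn_integral_add) measurable
  also have "(\<integral>\<^sup>+\<psi>. ennreal (indicator {pi/2..2*pi/3} \<psi> * hc c \<psi>) \<partial>lborel) = Ah c"
  proof -
    have "(\<integral>\<^sup>+\<psi>. ennreal (indicator {pi/2..2*pi/3} \<psi> * hc c \<psi>) \<partial>lborel)
       = ennreal \<bar>-1\<bar> * (\<integral>\<^sup>+x. ennreal (indicator {pi/2..2*pi/3} (pi + (-1) * x) * hc c (pi + (-1) * x)) \<partial>lborel)"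
      apply (rule nn_integral_real_affine)
       apply measurable
      done
    also have "(\<lambda>x. ennreal (indicator {pi/2..2*pi/3} (pi + (-1) * x) * hc c (pi + (-1) * x)))
       = (\<lambda>x. ennreal (indicator {pi/3..pi/2} x * hc c x))"
    proof (rule ext)
      fix x :: real
      have "indicator {pi/2..2*pi/3} (pi + (-1) * x) = (indicator {pi/3..pi/2} x :: real)"
        by (auto simp: indicator_def)
      moreover have "hc c (pi + (-1) * x) = hc c x" by (simp add: hc_def)
      ultimately show "ennreal (indicator {pi/2..2*pi/3} (pi + (-1) * x) * hc c (pi + (-1) * x))
         = ennreal (indicator {pi/3..pi/2} x * hc c x)" by simp
    qed
    finally have "(\<integral>\<^sup>+\<psi>. ennreal (indicator {pi/2..2*pi/3} \<psi> * hc c \<psi>) \<partial>lborel) = ennreal \<bar>-1\<bar> * Ah c"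
      unfolding Ah_def .
    moreover have "ennreal \<bar>-1\<bar> = (1::ennreal)" by simp
    ultimately show ?thesis by simp
  qed
  finally show ?thesis by (simp only: mult_2)
qed

lemma h1_eq: assumes c: "c_star \<le> c" "c \<le> c_bar"
  shows "h1 c = 2 * enn2real (Ah c)"
proof -
  note C = cI[OF c]
  define S where "S = {pi/3..2*pi/3}"
  define a where "a = enn2real (Ah c)"
  have fin: "Ah c < top" using Ah_fin[OF c] by (metis ennreal_numeral le_less_trans ennreal_less_top)
  have a: "Ah c = ennreal a" "0 \<le> a" using fin by (auto simp: a_def)
  have "(\<integral>\<^sup>+\<psi>. ennreal (indicator S \<psi> * hc c \<psi>) \<partial>lborel) = ennreal (2 * a)"
    using A2_eq[OF c] a by (simp add: S_def ennreal_mult)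
  hence "((\<lambda>\<psi>. indicator S \<psi> * hc c \<psi>) has_integral (2 * a)) UNIV"
    using a by (intro nn_integral_has_integral) (auto simp: S_def hc_nonneg)
  hence "((\<lambda>\<psi>. if \<psi> \<in> S then hc c \<psi> else 0) has_integral (2 * a)) UNIV"
    by (rule has_integral_cong[THEN iffD1, rotated]) (simp add: indicator_def)
  hence hi: "(hc c has_integral (2 * a)) S" by (simp add: has_integral_restrict_UNIV)
  have "h1 c = integral S (hc c)"
    unfolding h1_def S_def
  proof (rule integral_cong)
    fix \<psi> assume "\<psi> \<in> {pi/3..2*pi/3}"
    hence "sqrt 3 / 2 \<le> sin \<psi>" by (rule sin_ge)
    hence "c * (sqrt 3 / 2) \<le> c * sin \<psi>" using C by (intro mult_left_mono) auto
    moreover have "sg c = c * (sqrt 3 / 2)" by simp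
    ultimately have "1 \<le> c * sin \<psi>" using C(2) by linarith
    thus "1 / (1 - (R_minus (c * sin \<psi>))^2) = hc c \<psi>" by (simp add: hc_def Rm'_def max_def)
  qed
  also have "\<dots> = 2 * a" using hi by (rule integral_unique)
  finally show ?thesis by (simp add: a_def)
qed

lemma Phi_real: assumes c: "c_star \<le> c" "c \<le> c_bar"
  shows "Phi c = ennreal (Jf c + enn2real (Ah c))" "h1 c + 2 * h2 c = 2 * (Jf c + enn2real (Ah c)) + 2 * Ipf c"
proof -
  have fin: "Ah c < top" using Ah_fin[OF c] by (metis ennreal_numeral le_less_trans ennreal_less_top)
  hence a: "Ah c = ennreal (enn2real (Ah c))" by simp
  have "Phi c = ennreal (Jf c) + ennreal (enn2real (Ah c))" using Phi_eq[OF c] a by simp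
  also have "\<dots> = ennreal (Jf c + enn2real (Ah c))" using Jf_nn(2)[OF c] by (simp add: ennreal_plus)
  finally show "Phi c = ennreal (Jf c + enn2real (Ah c))" .
  show "h1 c + 2 * h2 c = 2 * (Jf c + enn2real (Ah c)) + 2 * Ipf c"
    using h1_eq[OF c] h2_split[OF c] by (simp add: algebra_simps)
qed

theorem mainTheorem14:
  shows "mono_on {c_star .. c_bar} (\<lambda>c. h1 c + 2 * h2 c) \<and> mono_on {c_star .. c_bar} h2"
proof
  show "mono_on {c_star .. c_bar} h2" by (rule h2_mono)
  show "mono_on {c_star .. c_bar} (\<lambda>c. h1 c + 2 * h2 c)"
  proof (rule mono_onI)
    fix c1 c2 assume "c1 \<in> {c_star..c_bar}" "c2 \<in> {c_star..c_bar}" "c1 \<le> c2"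
    hence c: "c_star \<le> c1" "c1 \<le> c2" "c2 \<le> c_bar" by auto
    have c1I: "c_star \<le> c1" "c1 \<le> c_bar" and c2I: "c_star \<le> c2" "c2 \<le> c_bar" using c by auto
    define p1 where "p1 = Jf c1 + enn2real (Ah c1)"
    define p2 where "p2 = Jf c2 + enn2real (Ah c2)"
    define k where "k = (235/1000) * (c2 - c1)"
    have k0: "0 \<le> k" using c by (simp add: k_def)
    have p2: "0 \<le> p2" using Jf_nn(2)[OF c2I] by (simp add: p2_def)
    have "ennreal p1 \<le> ennreal p2 + ennreal k * 4"
      using Phi_diff[OF c] Phi_real(1)[OF c1I] Phi_real(1)[OF c2I] by (simp add: p1_def p2_def k_def)
    also have "\<dots> = ennreal (p2 + k * 4)" using p2 k0 by (simp add: ennreal_plus ennreal_mult)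
    finally have "p1 \<le> p2 + k * 4" using p2 k0 by (subst (asm) ennreal_le_iff) auto
    moreover have "Ipf c1 + 2 * (c2 - c1) \<le> Ipf c2" by (rule Ip_est[OF c])
    moreover have "h1 c1 + 2 * h2 c1 = 2 * p1 + 2 * Ipf c1" using Phi_real(2)[OF c1I] by (simp add: p1_def)
    moreover have "h1 c2 + 2 * h2 c2 = 2 * p2 + 2 * Ipf c2" using Phi_real(2)[OF c2I] by (simp add: p2_def)
    ultimately show "h1 c1 + 2 * h2 c1 \<le> h1 c2 + 2 * h2 c2" using c k_def by argo
  qed
qed

end
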